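(* If $G$ is a connected cubic graph of order $n$ different from the Heawood graph, then $\gamma_{st}(G)\leq 2n/3$, and this bound is sharp.
   Context: For a vertex $v$, $N(v)$ is its open neighborhood. A signed total dominating function (STDF) of $G$ is a function $f:V(G)\to\{-1,1\}$ such that $\sum_{u\in N(v)}f(u)\geq 1$ for every vertex $v$; the signed total domination number $\gamma_{st}(G)$ is the minimum of $\sum_{v\in V(G)}f(v)$ over all STDFs $f$ of $G$. The Heawood graph is the cubic bipartite graph on 14 vertices that is the point–line incidence graph of the Fano plane. *)

theory Defs
  imports Main
begin

definition simple_graph :: "'a set \<Rightarrow> ('a \<Rightarrow> 'a \<Rightarrow> bool) \<Rightarrow> bool" where
  "simple_graph V E \<longleftrightarrow> finite V \<and> (\<forall>x y. E x y \<longrightarrow> x \<in> V \<and> y \<in> V)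
     \<and> (\<forall>x y. E x y \<longrightarrow> E y x) \<and> (\<forall>x. \<not> E x x)"

definition nbhd :: "'a set \<Rightarrow> ('a \<Rightarrow> 'a \<Rightarrow> bool) \<Rightarrow> 'a \<Rightarrow> 'a set" where
  "nbhd V E v = {u \<in> V. E v u}"

definition cubic :: "'a set \<Rightarrow> ('a \<Rightarrow> 'a \<Rightarrow> bool) \<Rightarrow> bool" where
  "cubic V E \<longleftrightarrow> (\<forall>v \<in> V. card (nbhd V E v) = 3)"

definition connected_graph :: "'a set \<Rightarrow> ('a \<Rightarrow> 'a \<Rightarrow> bool) \<Rightarrow> bool" where
  "connected_graph V E \<longleftrightarrow> V \<noteq> {} \<and> (\<forall>u \<in> V. \<forall>v \<in> V. E\<^sup>*\<^sup>* u v)"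

definition is_STDF :: "'a set \<Rightarrow> ('a \<Rightarrow> 'a \<Rightarrow> bool) \<Rightarrow> ('a \<Rightarrow> int) \<Rightarrow> bool" where
  "is_STDF V E f \<longleftrightarrow> (\<forall>v \<in> V. f v \<in> {-1, 1}) \<and> (\<forall>v \<in> V. (\<Sum>u \<in> nbhd V E v. f u) \<ge> 1)"

definition gamma_st :: "'a set \<Rightarrow> ('a \<Rightarrow> 'a \<Rightarrow> bool) \<Rightarrow> int" where
  "gamma_st V E = Min {(\<Sum>v \<in> V. f v) | f. is_STDF V E f}"

text \<open>The Heawood graph: points 0..6 and lines 7..13 of the Fano plane,
line 7+i = {i, i+1, i+3} (mod 7); point p is adjacent to line 7+i iff p lies on it.\<close>

definition heawood_V :: "nat set" where
  "heawood_V = {0..<14}"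

definition heawood_inc :: "nat \<Rightarrow> nat \<Rightarrow> bool" where
  "heawood_inc p i \<longleftrightarrow> p < 7 \<and> i < 7 \<and>
     (p = i mod 7 \<or> p = (i + 1) mod 7 \<or> p = (i + 3) mod 7)"

definition heawood_E :: "nat \<Rightarrow> nat \<Rightarrow> bool" where
  "heawood_E x y \<longleftrightarrow>
     (x < 7 \<and> 7 \<le> y \<and> y < 14 \<and> heawood_inc x (y - 7)) \<or>
     (y < 7 \<and> 7 \<le> x \<and> x < 14 \<and> heawood_inc y (x - 7))"

definition graph_iso :: "'a set \<Rightarrow> ('a \<Rightarrow> 'a \<Rightarrow> bool) \<Rightarrow> 'b set \<Rightarrow> ('b \<Rightarrow> 'b \<Rightarrow> bool) \<Rightarrow> bool" where
  "graph_iso V E W F \<longleftrightarrow> (\<exists>h. bij_betw h V W \<and> (\<forall>x \<in> V. \<forall>y \<in> V. E x y \<longleftrightarrow> F (h x) (h y)))"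

definition is_heawood :: "'a set \<Rightarrow> ('a \<Rightarrow> 'a \<Rightarrow> bool) \<Rightarrow> bool" where
  "is_heawood V E \<longleftrightarrow> graph_iso V E heawood_V heawood_E"

end

theory Submission
  imports Defs
begin


definition nb :: "('a \<Rightarrow> 'a \<Rightarrow> bool) \<Rightarrow> 'a \<Rightarrow> 'a set" where "nb R x = {y. R x y}"
definition indep :: "('a \<Rightarrow> 'a \<Rightarrow> bool) \<Rightarrow> 'a set \<Rightarrow> bool" where
  "indep R I \<longleftrightarrow> (\<forall>x\<in>I. \<forall>y\<in>I. \<not> R x y)"
definition proper :: "('a \<Rightarrow> 'a \<Rightarrow> bool) \<Rightarrow> 'a set \<Rightarrow> ('a \<Rightarrow> nat) \<Rightarrow> bool" where
  "proper R S c \<longleftrightarrow> (\<forall>x\<in>S. \<forall>y\<in>S. R x y \<longrightarrow> c x \<noteq> c y)"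

lemma degen_colour:
  assumes fin: "finite S" and sym: "\<And>x y. R x y \<Longrightarrow> R y x" and irr: "\<And>x. \<not> R x x"
    and deg: "\<And>T. T \<subseteq> S \<Longrightarrow> T \<noteq> {} \<Longrightarrow> \<exists>w\<in>T. card (nb R w \<inter> T) < q"
  shows "\<exists>c. (\<forall>x\<in>S. c x < q) \<and> proper R S c"
proof -
  have "\<forall>T. T \<subseteq> S \<longrightarrow> card T = n \<longrightarrow> (\<exists>c. (\<forall>x\<in>T. c x < q) \<and> proper R T c)" for n
  proof (induction n rule: less_induct)
    case (less n)
    show ?case
    proof (intro allI impI)
      fix T assume T: "T \<subseteq> S" "card T = n"
      show "\<exists>c. (\<forall>x\<in>T. c x < q) \<and> proper R T c"
      proof (cases "T = {}")
        case True thus ?thesis by (auto simp: proper_def)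
      next
        case False
        then obtain w where w: "w \<in> T" "card (nb R w \<inter> T) < q" using deg[OF T(1)] by blast
        have finT: "finite T" using T(1) fin finite_subset by blast
        have "card (T - {w}) < n" using T(2) w(1) finT by (metis card_Diff1_less)
        then obtain c' where c': "\<forall>x\<in>T - {w}. c' x < q" "proper R (T - {w}) c'"
          using less[rule_format, of "card (T - {w})" "T - {w}"] T(1) by blast
        define U where "U = c' ` (nb R w \<inter> (T - {w}))"
        have "card U \<le> card (nb R w \<inter> (T - {w}))" unfolding U_def by (rule card_image_le) (use finT in auto)
        also have "\<dots> \<le> card (nb R w \<inter> T)" by (rule card_mono) (use finT in auto)
        finally have cU: "card U < q" using w(2) by linarith
        have "\<not> {0..<q} \<subseteq> U"
        proof
          assume "{0..<q} \<subseteq> U"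
          hence "card {0..<q} \<le> card U" using finT unfolding U_def by (intro card_mono) auto
          thus False using cU by simp
        qed
        then obtain col where col: "col < q" "col \<notin> U" by (metis atLeastLessThan_iff zero_le subsetI)
        define c where "c = c'(w := col)"
        have "\<forall>x\<in>T. c x < q" using c'(1) col(1) by (auto simp: c_def)
        moreover have "proper R T c"
          unfolding proper_def
        proof (intro ballI impI)
          fix x y assume xy: "x \<in> T" "y \<in> T" "R x y"
          show "c x \<noteq> c y"
          proof (cases "x = w")
            case True
            hence "y \<noteq> w" using xy irr by auto
            hence "c' y \<in> U" using xy True by (auto simp: U_def nb_def)
            thus ?thesis using True \<open>y \<noteq> w\<close> col by (auto simp: c_def)
          next
            case False
            note xw = False
            show ?thesis
            proof (cases "y = w")
              case True
              hence "c' x \<in> U" using xy xw sym by (auto simp: U_def nb_def)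
              thus ?thesis using True xw col by (auto simp: c_def)
            next
              case False
              thus ?thesis using xw xy c'(2) by (auto simp: c_def proper_def)
            qed
          qed
        qed
        ultimately show ?thesis by blast
      qed
    qed
  qed
  thus ?thesis by blast
qed

lemma colour_indep:
  assumes fin: "finite S" and c: "\<forall>x\<in>S. c x < q" "proper R S c" and q: "0 < q"
  shows "\<exists>I\<subseteq>S. indep R I \<and> card S \<le> q * card I"
proof -
  define cl where "cl i = {x\<in>S. c x = i}" for i
  define f where "f i = card (cl i)" for i
  define m where "m = Max (f ` {..<q})"
  have "m \<in> f ` {..<q}" unfolding m_def using q by (intro Max_in) auto
  then obtain i0 where i0: "i0 < q" "f i0 = m" by auto
  have le: "f i \<le> m" if "i < q" for i unfolding m_def using that by (intro Max_ge) auto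
  have "S = (\<Union>i\<in>{..<q}. cl i)" using c(1) by (auto simp: cl_def)
  hence "card S \<le> (\<Sum>i\<in>{..<q}. card (cl i))" using card_UN_le[of "{..<q}" cl] by simp
  also have "\<dots> \<le> q * m" using sum_bounded_above[of "{..<q}" f m] le by (simp add: f_def)
  finally have "card S \<le> q * card (cl i0)" using i0 by (simp add: f_def)
  moreover have "indep R (cl i0)" using c(2) unfolding indep_def proper_def cl_def by blast
  moreover have "cl i0 \<subseteq> S" by (auto simp: cl_def)
  ultimately show ?thesis by blast
qed

lemma leave:
  assumes "T \<subseteq> C" "T \<noteq> {}" "\<not> C \<subseteq> T" "\<forall>a\<in>C. \<forall>b\<in>C. R\<^sup>*\<^sup>* a b"
  shows "\<exists>w\<in>T. \<exists>z. R w z \<and> z \<notin> T"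
proof -
  obtain t where t: "t \<in> T" using assms(2) by auto
  obtain s where s: "s \<in> C" "s \<notin> T" using assms(3) by auto
  have "R\<^sup>*\<^sup>* t s" using assms(1,4) t s by auto
  from this s(2) show ?thesis
  proof (induction rule: rtranclp_induct)
    case base thus ?case using t by simp
  next
    case (step y z)
    show ?case
    proof (cases "y \<in> T")
      case True thus ?thesis using step by blast
    next
      case False thus ?thesis using step.IH by blast
    qed
  qed
qed

locale comp6 =
  fixes R :: "'a \<Rightarrow> 'a \<Rightarrow> bool" and C :: "'a set"
  assumes fin: "finite C" and sym: "\<And>x y. R x y \<Longrightarrow> R y x" and irr: "\<And>x. \<not> R x x"
    and closed: "\<And>x. x \<in> C \<Longrightarrow> nb R x \<subseteq> C"
    and deg6: "\<And>x. x \<in> C \<Longrightarrow> card (nb R x) \<le> 6"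
    and conn: "\<forall>a\<in>C. \<forall>b\<in>C. R\<^sup>*\<^sup>* a b"
begin

lemma fin_nb: "x \<in> C \<Longrightarrow> finite (nb R x)"
  using closed fin finite_subset by blast

lemma drop_deg:
  assumes "T \<subseteq> C" "T \<noteq> {}" "\<not> C \<subseteq> T"
  shows "\<exists>w\<in>T. card (nb R w \<inter> T) < 6"
proof -
  obtain w z where wz: "w \<in> T" "R w z" "z \<notin> T" using leave[OF assms conn] by blast
  have wC: "w \<in> C" using wz assms(1) by auto
  have "nb R w \<inter> T \<subset> nb R w" using wz by (auto simp: nb_def)
  hence "card (nb R w \<inter> T) < card (nb R w)" using fin_nb[OF wC] by (rule psubset_card_mono[rotated])
  thus ?thesis using deg6[OF wC] wz(1) by (intro bexI[of _ w]) auto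
qed

lemma deficient:
  assumes r: "r \<in> C" "card (nb R r) < 6"
  shows "\<exists>I\<subseteq>C. indep R I \<and> card C \<le> 6 * card I"
proof -
  have "\<exists>c. (\<forall>x\<in>C. c x < 6) \<and> proper R C c"
  proof (rule degen_colour[OF fin sym irr])
    fix T assume T: "T \<subseteq> C" "T \<noteq> {}"
    show "\<exists>w\<in>T. card (nb R w \<inter> T) < 6"
    proof (cases "C \<subseteq> T")
      case True
      hence "r \<in> T" using r by auto
      moreover have "card (nb R r \<inter> T) \<le> card (nb R r)"
        using fin_nb[OF r(1)] by (intro card_mono) auto
      ultimately show ?thesis using r(2) by (intro bexI[of _ r]) auto
    next
      case False thus ?thesis using drop_deg T by blast
    qed
  qed
  then obtain c where "\<forall>x\<in>C. c x < 6" "proper R C c" by blast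
  from colour_indep[OF fin this] show ?thesis by simp
qed

lemma colour_minus:
  assumes "v \<in> C"
  shows "\<exists>c. (\<forall>x\<in>C - {v}. c x < 6) \<and> proper R (C - {v}) c"
proof (rule degen_colour[OF _ sym irr])
  show "finite (C - {v})" using fin by simp
  fix T assume T: "T \<subseteq> C - {v}" "T \<noteq> {}"
  thus "\<exists>w\<in>T. card (nb R w \<inter> T) < 6" using drop_deg[of T] assms by blast
qed

lemma minus_one:
  assumes "v \<in> C"
  shows "\<exists>I\<subseteq>C. indep R I \<and> card C \<le> 6 * card I + 1"
proof -
  obtain c where c: "\<forall>x\<in>C - {v}. c x < 6" "proper R (C - {v}) c" using colour_minus[OF assms] by blast
  have "finite (C - {v})" using fin by simp
  from colour_indep[OF this c] obtain I where "I \<subseteq> C - {v}" "indep R I" "card (C - {v}) \<le> 6 * card I"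
    by auto
  moreover have "card (C - {v}) = card C - 1" using assms fin by simp
  ultimately show ?thesis by auto
qed

end


lemma parent_ex:
  assumes "Q\<^sup>*\<^sup>* x y" "y \<noteq> x"
  shows "\<exists>p. Q\<^sup>*\<^sup>* x p \<and> Q p y \<and> (LEAST n. (Q ^^ n) x p) < (LEAST n. (Q ^^ n) x y)"
proof -
  obtain n where n: "(Q ^^ n) x y" using assms(1) by (auto simp: rtranclp_power)
  define d where "d = (LEAST n. (Q ^^ n) x y)"
  have d: "(Q ^^ d) x y" unfolding d_def using n by (rule LeastI)
  have "d \<noteq> 0"
  proof
    assume "d = 0"
    with d have "x = y" by simp
    thus False using assms(2) by simp
  qed
  then obtain m where m: "d = Suc m" using not0_implies_Suc by blast
  from d[unfolded m] obtain p where p: "(Q ^^ m) x p" "Q p y" by (rule relpowp_Suc_E)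
  have "(LEAST n. (Q ^^ n) x p) \<le> m" using p(1) by (rule Least_le)
  hence "(LEAST n. (Q ^^ n) x p) < d" using m by simp
  moreover have "Q\<^sup>*\<^sup>* x p" using p(1) by (rule relpowp_imp_rtranclp)
  ultimately show ?thesis using p(2) unfolding d_def by blast
qed

lemma sum_split_bound:
  fixes f :: "nat \<Rightarrow> nat"
  assumes "finite A" "a \<in> A" "f a = 0" "\<forall>j\<in>A - {a}. 1 \<le> f j" "B \<subseteq> A - {a}"
  shows "sum f B + card (A - {a} - B) \<le> sum f A"
proof -
  have e1: "sum f A = f a + sum f (A - {a})" using assms(1,2) by (simp add: sum.remove)
  have e2: "sum f (A - {a}) = sum f B + sum f (A - {a} - B)"
    using assms(1,5) by (metis finite_Diff sum.subset_diff add.commute)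
  have e3: "card (A - {a} - B) \<le> sum f (A - {a} - B)"
    using assms(4) sum_mono[of "A - {a} - B" "\<lambda>_. 1::nat" f] by auto
  show ?thesis using e1 e2 e3 assms(3) by linarith
qed

lemma avoid:
  assumes "Q\<^sup>*\<^sup>* x0 z" "z \<noteq> x0" "\<And>z. Q x0 z \<Longrightarrow> z = u"
  shows "(\<lambda>a b. Q a b \<and> a \<noteq> x0 \<and> b \<noteq> x0)\<^sup>*\<^sup>* u z"
  using assms(1,2)
proof (induction rule: rtranclp_induct)
  case base thus ?case by simp
next
  case (step y z)
  show ?case
  proof (cases "y = x0")
    case True thus ?thesis using step assms(3) by auto
  next
    case False
    thus ?thesis using step by (auto intro: rtranclp.rtrancl_into_rtrancl)
  qed
qed

locale kempe = comp6 +
  fixes v :: 'a and k :: nat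
  assumes reg: "\<And>x. x \<in> C \<Longrightarrow> card (nb R x) = 6"
    and vC: "v \<in> C"
    and cardC: "card C = 6 * k + 1"
    and NI: "\<And>I. I \<subseteq> C \<Longrightarrow> indep R I \<Longrightarrow> card I \<le> k"
begin

definition "Sp = C - {v}"
definition "col c \<longleftrightarrow> (\<forall>x\<in>Sp. c x < 6) \<and> proper R Sp c"
definition "cl c i = {x\<in>Sp. c x = i}"
definition "cnt c u j = card {w\<in>Sp. R u w \<and> c w = j}"

lemma finSp: "finite Sp" using fin by (simp add: Sp_def)
lemma cardSp: "card Sp = 6 * k" using cardC vC fin by (simp add: Sp_def)
lemma nbv_Sp: "nb R v \<subseteq> Sp" using closed[OF vC] irr by (auto simp: Sp_def nb_def)

lemma cl_indep: "col c \<Longrightarrow> indep R (cl c i)"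
  unfolding col_def proper_def indep_def cl_def by blast

lemma cl_le: "col c \<Longrightarrow> card (cl c i) \<le> k"
proof -
  assume "col c"
  moreover have "cl c i \<subseteq> C" by (auto simp: cl_def Sp_def)
  ultimately show ?thesis using NI cl_indep by blast
qed

lemma F1:
  assumes "col c" "i < 6"
  shows "card (cl c i) = k"
proof (rule ccontr)
  assume "card (cl c i) \<noteq> k"
  hence lt: "card (cl c i) < k" using cl_le[OF assms(1)] by (simp add: order_less_le)
  have "Sp = (\<Union>j\<in>{..<6}. cl c j)" using assms(1) by (auto simp: col_def cl_def)
  moreover have "card (\<Union>j\<in>{..<6}. cl c j) = (\<Sum>j\<in>{..<6}. card (cl c j))"
    by (rule card_UN_disjoint) (auto simp: cl_def intro: finite_subset[OF _ finSp])
  ultimately have "card Sp = (\<Sum>j\<in>{..<6}. card (cl c j))" by simp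
  also have "\<dots> = card (cl c i) + (\<Sum>j\<in>{..<6} - {i}. card (cl c j))"
    using assms(2) by (simp add: sum.remove)
  also have "(\<Sum>j\<in>{..<6} - {i}. card (cl c j)) \<le> (\<Sum>j\<in>{..<6} - {i}. k)"
    by (rule sum_mono) (rule cl_le[OF assms(1)])
  also have "\<dots> = 5 * k" using assms(2) by simp
  finally show False using lt cardSp by linarith
qed

lemma F2:
  assumes "col c" "i < 6"
  shows "\<exists>w\<in>nb R v. c w = i"
proof (rule ccontr)
  assume no: "\<not> ?thesis"
  have "indep R (insert v (cl c i))"
    using cl_indep[OF assms(1), of i] no sym irr unfolding indep_def cl_def nb_def by blast
  hence "card (insert v (cl c i)) \<le> k" by (intro NI) (auto simp: cl_def Sp_def vC)
  moreover have "card (insert v (cl c i)) = k + 1"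
    using F1[OF assms] finSp by (subst card_insert_disjoint) (auto simp: cl_def Sp_def)
  ultimately show False by simp
qed

lemma F3:
  assumes "col c" "u \<in> Sp" "j < 6" "j \<noteq> c u"
  shows "\<exists>w\<in>Sp. R u w \<and> c w = j"
proof (rule ccontr)
  assume no: "\<not> ?thesis"
  have "indep R (insert u (cl c j))"
    using cl_indep[OF assms(1), of j] no sym irr unfolding indep_def cl_def by blast
  hence "card (insert u (cl c j)) \<le> k" using assms(2) by (intro NI) (auto simp: cl_def Sp_def)
  moreover have "card (insert u (cl c j)) = k + 1"
    using F1[OF assms(1,3)] finSp assms(4) by (subst card_insert_disjoint) (auto simp: cl_def)
  ultimately show False by simp
qed

lemma cnt_ge1: "col c \<Longrightarrow> u \<in> Sp \<Longrightarrow> j < 6 \<Longrightarrow> j \<noteq> c u \<Longrightarrow> 1 \<le> cnt c u j"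
  using F3[of c u j] finSp unfolding cnt_def
  by (metis (mono_tags, lifting) One_nat_def Suc_leI card_gt_0_iff empty_iff finite_subset mem_Collect_eq subsetI)

lemma cnt_self: "col c \<Longrightarrow> u \<in> Sp \<Longrightarrow> cnt c u (c u) = 0"
proof -
  assume a: "col c" "u \<in> Sp"
  have "{w\<in>Sp. R u w \<and> c w = c u} = {}"
  proof (rule equals0I)
    fix w assume "w \<in> {w\<in>Sp. R u w \<and> c w = c u}"
    hence "w \<in> Sp" "R u w" "c w = c u" by auto
    thus False using a unfolding col_def proper_def by metis
  qed
  thus ?thesis unfolding cnt_def by (simp only: card.empty)
qed

lemma cnt_sum:
  assumes "col c" "u \<in> Sp"
  shows "(\<Sum>j\<in>{..<6}. cnt c u j) = card (nb R u \<inter> Sp)"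
proof -
  have "nb R u \<inter> Sp = (\<Union>j\<in>{..<6}. {w\<in>Sp. R u w \<and> c w = j})"
    using assms(1) by (auto simp: col_def nb_def)
  thus ?thesis unfolding cnt_def using finSp
    by (simp) (subst card_UN_disjoint, auto)
qed

lemma deg_Sp: "u \<in> Sp \<Longrightarrow> card (nb R u \<inter> Sp) \<le> 6"
  using deg6[of u] fin_nb[of u] by (auto simp: Sp_def intro: order_trans[OF card_mono])

lemma deg_nbv: "u \<in> nb R v \<Longrightarrow> card (nb R u \<inter> Sp) = 5"
proof -
  assume u: "u \<in> nb R v"
  have uC: "u \<in> C" using u closed[OF vC] by auto
  have "nb R u \<inter> Sp = nb R u - {v}" using closed[OF uC] by (auto simp: Sp_def)
  moreover have "v \<in> nb R u" using u sym by (auto simp: nb_def)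
  ultimately show ?thesis using reg[OF uC] fin_nb[OF uC] by simp
qed

lemma cnt_bound:
  assumes "col c" "u \<in> Sp" "B \<subseteq> {..<6} - {c u}"
  shows "(\<Sum>j\<in>B. cnt c u j) + card ({..<6} - {c u} - B) \<le> card (nb R u \<inter> Sp)"
proof -
  have cu: "c u < 6" using assms(1,2) by (auto simp: col_def)
  have "sum (cnt c u) B + card ({..<6} - {c u} - B) \<le> sum (cnt c u) {..<6}"
  proof (rule sum_split_bound)
    show "c u \<in> {..<6}" using cu by simp
    show "cnt c u (c u) = 0" using cnt_self[OF assms(1,2)] .
    show "\<forall>j\<in>{..<6} - {c u}. 1 \<le> cnt c u j" using cnt_ge1[OF assms(1,2)] by blast
  qed (use assms(3) in auto)
  thus ?thesis using cnt_sum[OF assms(1,2)] by simp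
qed

lemma F5a:
  assumes "col c" "u \<in> Sp" "j < 6" "j \<noteq> c u"
  shows "cnt c u j \<le> 2"
proof -
  have cu: "c u < 6" using assms(1,2) by (auto simp: col_def)
  have "card ({..<6::nat} - {c u} - {j}) = 4" using cu assms(3,4)
    by (simp add: card_Diff_singleton_if)
  moreover have "(\<Sum>j\<in>{j}. cnt c u j) + card ({..<6} - {c u} - {j}) \<le> card (nb R u \<inter> Sp)"
    by (rule cnt_bound[OF assms(1,2)]) (use assms in auto)
  ultimately show ?thesis using deg_Sp[OF assms(2)] by simp
qed

lemma F5b:
  assumes "col c" "u \<in> Sp" "i < 6" "i \<noteq> c u" "j < 6" "j \<noteq> c u" "i \<noteq> j"
  shows "\<not> (2 \<le> cnt c u i \<and> 2 \<le> cnt c u j)"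
proof -
  have cu: "c u < 6" using assms(1,2) by (auto simp: col_def)
  have e: "{..<6::nat} - {c u} - {i, j} = {..<6} - {c u, i, j}" by auto
  have "card {c u, i, j} = 3" using assms by auto
  hence "card ({..<6::nat} - {c u} - {i, j}) = 3" unfolding e using cu assms
    by (subst card_Diff_subset) auto
  moreover have "(\<Sum>j\<in>{i,j}. cnt c u j) + card ({..<6} - {c u} - {i,j}) \<le> card (nb R u \<inter> Sp)"
    by (rule cnt_bound[OF assms(1,2)]) (use assms in auto)
  ultimately show ?thesis using deg_Sp[OF assms(2)] assms(7) by simp
qed

lemma F5c:
  assumes "col c" "u \<in> nb R v" "j < 6" "j \<noteq> c u"
  shows "cnt c u j = 1"
proof -
  have uS: "u \<in> Sp" using assms(2) nbv_Sp by auto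
  have cu: "c u < 6" using assms(1) uS by (auto simp: col_def)
  have "card ({..<6::nat} - {c u} - {j}) = 4" using cu assms(3,4)
    by (simp add: card_Diff_singleton_if)
  moreover have "(\<Sum>j\<in>{j}. cnt c u j) + card ({..<6} - {c u} - {j}) \<le> card (nb R u \<inter> Sp)"
    by (rule cnt_bound[OF assms(1) uS]) (use assms in auto)
  ultimately show ?thesis using deg_nbv[OF assms(2)] cnt_ge1[OF assms(1) uS assms(3,4)] by simp
qed

end


context kempe begin

definition "kr c i j a b \<longleftrightarrow> a \<in> Sp \<and> b \<in> Sp \<and> R a b \<and> c a \<in> {i, j} \<and> c b \<in> {i, j}"
definition "kc c i j x = {y. (kr c i j)\<^sup>*\<^sup>* x y}"
definition "sw c i j K = (\<lambda>y. if y \<in> K then (if c y = i then j else if c y = j then i else c y) else c y)"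

lemma kr_sym: "kr c i j a b \<Longrightarrow> kr c i j b a"
  unfolding kr_def using sym by blast

lemma kr_comm: "kr c i j = kr c j i"
  unfolding kr_def by (intro ext) auto

lemma rt_sym: "(kr c i j)\<^sup>*\<^sup>* a b \<Longrightarrow> (kr c i j)\<^sup>*\<^sup>* b a"
  by (induction rule: rtranclp_induct) (auto intro: converse_rtranclp_into_rtranclp kr_sym)

lemma kc_prop:
  assumes "x \<in> Sp" "c x \<in> {i, j}" "y \<in> kc c i j x"
  shows "y \<in> Sp \<and> c y \<in> {i, j}"
proof -
  have "(kr c i j)\<^sup>*\<^sup>* x y" using assms(3) by (simp add: kc_def)
  thus ?thesis
  proof (induction rule: rtranclp_induct)
    case base thus ?case using assms(1,2) by simp
  next
    case (step y z) thus ?case unfolding kr_def by blast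
  qed
qed

lemma kc_closed: "y \<in> kc c i j x \<Longrightarrow> kr c i j y z \<Longrightarrow> z \<in> kc c i j x"
  unfolding kc_def mem_Collect_eq by (rule rtranclp.rtrancl_into_rtrancl)

lemma kc_self: "x \<in> kc c i j x" by (simp add: kc_def)

lemma kc_sub: "x \<in> Sp \<Longrightarrow> c x \<in> {i, j} \<Longrightarrow> kc c i j x \<subseteq> Sp"
proof
  fix y assume "x \<in> Sp" "c x \<in> {i, j}" "y \<in> kc c i j x"
  from kc_prop[OF this] show "y \<in> Sp" by simp
qed

lemma sw_col:
  assumes c: "col c" and x: "x \<in> Sp" "c x \<in> {i, j}" and ij: "i < 6" "j < 6"
  shows "col (sw c i j (kc c i j x))"
proof -
  let ?K = "kc c i j x"
  have cK: "c y \<in> {i, j}" if "y \<in> ?K" for y using kc_prop[OF x that] by simp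
  have r1: "\<forall>y\<in>Sp. sw c i j ?K y < 6" using c ij by (auto simp: col_def sw_def)
  have r2: "proper R Sp (sw c i j ?K)"
    unfolding proper_def
  proof (intro ballI impI)
    fix a b assume ab: "a \<in> Sp" "b \<in> Sp" "R a b"
    have ne: "c a \<noteq> c b" using c ab by (auto simp: col_def proper_def)
    show "sw c i j ?K a \<noteq> sw c i j ?K b"
    proof (cases "a \<in> ?K")
      case aK: True
      show ?thesis
      proof (cases "b \<in> ?K")
        case True thus ?thesis using aK cK[OF aK] cK[OF True] ne by (auto simp: sw_def)
      next
        case False
        have "c b \<notin> {i, j}"
        proof
          assume "c b \<in> {i, j}"
          hence "kr c i j a b" using ab cK[OF aK] by (simp add: kr_def)
          thus False using kc_closed[OF aK] False by blast
        qed
        thus ?thesis using aK False cK[OF aK] by (auto simp: sw_def)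
      qed
    next
      case aK: False
      show ?thesis
      proof (cases "b \<in> ?K")
        case bK: True
        have "c a \<notin> {i, j}"
        proof
          assume "c a \<in> {i, j}"
          hence "kr c i j b a" using ab cK[OF bK] sym by (simp add: kr_def)
          thus False using kc_closed[OF bK] aK by blast
        qed
        thus ?thesis using aK bK cK[OF bK] by (auto simp: sw_def)
      next
        case False thus ?thesis using aK ne by (simp add: sw_def)
      qed
    qed
  qed
  show ?thesis using r1 r2 by (simp add: col_def)
qed

lemma balanced:
  assumes c: "col c" and x: "x \<in> Sp" "c x \<in> {i, j}" and ij: "i < 6" "j < 6" "i \<noteq> j"
  shows "card (kc c i j x \<inter> cl c i) = card (kc c i j x \<inter> cl c j)"
proof -
  let ?K = "kc c i j x" and ?c = "sw c i j (kc c i j x)"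
  have cK: "c y \<in> {i, j}" if "y \<in> ?K" for y using kc_prop[OF x that] by simp
  have KS: "?K \<subseteq> Sp" using kc_sub[of x c i j] x by simp
  have eq: "cl ?c i = (cl c i - ?K) \<union> (?K \<inter> cl c j)"
  proof (rule set_eqI)
    fix y
    show "y \<in> cl ?c i \<longleftrightarrow> y \<in> (cl c i - ?K) \<union> (?K \<inter> cl c j)"
    proof (cases "y \<in> ?K")
      case True
      have "c y \<in> {i, j}" "y \<in> Sp" using cK[OF True] KS True by auto
      thus ?thesis using True ij(3) by (auto simp: cl_def sw_def)
    next
      case False thus ?thesis by (simp add: cl_def sw_def)
    qed
  qed
  have fin1: "finite (cl c i)" "finite ?K" using finSp finite_subset[OF KS finSp] by (auto simp: cl_def)
  have "card (cl ?c i) = card (cl c i - ?K) + card (?K \<inter> cl c j)"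
    unfolding eq by (rule card_Un_disjoint) (use fin1 in auto)
  moreover have "card (cl c i - ?K) = card (cl c i) - card (?K \<inter> cl c i)"
    using card_Diff_subset_Int[of "cl c i" ?K] fin1 by (simp add: Int_commute)
  moreover have "card (?K \<inter> cl c i) \<le> card (cl c i)" using fin1 by (intro card_mono) auto
  moreover have "card (cl ?c i) = k" by (rule F1[OF sw_col[OF c x ij(1,2)] ij(1)])
  moreover have "card (cl c i) = k" by (rule F1[OF c ij(1)])
  ultimately show ?thesis by linarith
qed

definition "nv c i = (THE w. w \<in> nb R v \<and> c w = i)"

lemma nv_inj:
  assumes c: "col c" and w: "w1 \<in> nb R v" "w2 \<in> nb R v" "c w1 = c w2"
  shows "w1 = w2"
proof -
  have finN: "finite (nb R v)" using fin_nb[OF vC] .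
  have "{..<6} \<subseteq> c ` nb R v" using F2[OF c] by auto
  hence "6 \<le> card (c ` nb R v)" using finN by (metis card_lessThan card_mono finite_imageI)
  moreover have "card (c ` nb R v) \<le> card (nb R v)" using finN by (rule card_image_le)
  ultimately have "card (c ` nb R v) = card (nb R v)" using reg[OF vC] by simp
  hence "inj_on c (nb R v)" using finN by (simp add: inj_on_iff_eq_card)
  thus ?thesis using w by (auto dest: inj_onD)
qed

lemma nv_prop:
  assumes c: "col c" and i: "i < 6"
  shows "nv c i \<in> nb R v \<and> c (nv c i) = i"
proof -
  obtain w where w: "w \<in> nb R v" "c w = i" using F2[OF c i] by blast
  have "\<exists>!w. w \<in> nb R v \<and> c w = i" using w nv_inj[OF c] by blast
  thus ?thesis unfolding nv_def by (rule theI')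
qed

lemma nv_eq:
  assumes c: "col c" and w: "w \<in> nb R v" "c w = i"
  shows "nv c i = w"
  unfolding nv_def using w nv_inj[OF c] by blast

lemma nv_Sp: "col c \<Longrightarrow> i < 6 \<Longrightarrow> nv c i \<in> Sp"
  using nv_prop nbv_Sp by blast

lemma F7:
  assumes c: "col c" and ij: "i < 6" "j < 6" "i \<noteq> j"
  shows "(kr c i j)\<^sup>*\<^sup>* (nv c i) (nv c j)"
proof (rule ccontr)
  assume nc: "\<not> ?thesis"
  let ?x = "nv c i"
  let ?K = "kc c i j ?x"
  have x: "?x \<in> Sp" "c ?x \<in> {i, j}" using nv_Sp[OF c ij(1)] nv_prop[OF c ij(1)] by auto
  let ?c = "sw c i j ?K"
  have c': "col ?c" using sw_col[OF c x ij(1,2)] .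
  obtain w where w: "w \<in> nb R v" "?c w = i" using F2[OF c' ij(1)] by blast
  have cK: "c y \<in> {i, j}" if "y \<in> ?K" for y using kc_prop[OF x that] by simp
  show False
  proof (cases "w \<in> ?K")
    case True
    hence "c w = j" using w(2) cK[OF True] ij(3) by (auto simp: sw_def split: if_splits)
    hence "w = nv c j" using nv_eq[OF c w(1)] by simp
    thus False using True nc by (simp add: kc_def)
  next
    case False
    hence "c w = i" using w(2) by (simp add: sw_def)
    hence "w = ?x" using nv_eq[OF c w(1)] by simp
    thus False using False kc_self[of ?x c i j] by simp
  qed
qed

end


context kempe begin

lemma path:
  assumes c: "col c" and ij: "i < 6" "j < 6" "i \<noteq> j" and x: "x \<in> Sp" "c x \<in> {i, j}"
    and a: "a1 \<in> kc c i j x" "a2 \<in> kc c i j x" "c a1 = j" "c a2 = j" "a1 \<noteq> a2"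
      "cnt c a1 i = 1" "cnt c a2 i = 1"
  shows False
proof -
  let ?K = "kc c i j x"
  have cK: "c y \<in> {i, j}" if "y \<in> ?K" for y using kc_prop[OF x that] by simp
  have KS: "?K \<subseteq> Sp" using kc_sub[of x c i j] x by simp
  have finK: "finite ?K" using finite_subset[OF KS finSp] .
  define Kj where "Kj = ?K \<inter> cl c j"
  define Ki where "Ki = ?K \<inter> cl c i"
  have bal: "card Ki = card Kj" unfolding Ki_def Kj_def by (rule balanced[OF c x ij])
  have Kun: "?K = Ki \<union> Kj" using cK KS by (auto simp: Ki_def Kj_def cl_def)
  have cardK: "card ?K = card Ki + card Kj"
    unfolding Kun by (rule card_Un_disjoint) (use finK ij(3) in \<open>auto simp: Ki_def Kj_def cl_def\<close>)
  define B where "B b = {a\<in>Sp. R b a \<and> c a = i}" for b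
  define D where "D = Sigma Kj B"
  have finKj: "finite Kj" using finK by (simp add: Kj_def)
  have finD: "finite D" unfolding D_def using finKj finSp by (auto simp: B_def)
  have cardD: "card D = (\<Sum>b\<in>Kj. cnt c b i)"
    unfolding D_def using finKj finSp by (subst card_SigmaI) (auto simp: B_def cnt_def)
  have a1j: "a1 \<in> Kj" and a2j: "a2 \<in> Kj" using a KS by (auto simp: Kj_def cl_def)
  have le2: "cnt c b i \<le> 2" if "b \<in> Kj" for b
    using F5a[OF c, of b i] that ij by (auto simp: Kj_def cl_def)
  have s1: "(\<Sum>b\<in>Kj. cnt c b i) = cnt c a1 i + cnt c a2 i + (\<Sum>b\<in>Kj - {a1} - {a2}. cnt c b i)"
  proof -
    have "(\<Sum>b\<in>Kj. cnt c b i) = cnt c a1 i + (\<Sum>b\<in>Kj - {a1}. cnt c b i)"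
      using finKj a1j by (rule sum.remove)
    moreover have "(\<Sum>b\<in>Kj - {a1}. cnt c b i) = cnt c a2 i + (\<Sum>b\<in>Kj - {a1} - {a2}. cnt c b i)"
      using finKj a2j a(5) by (intro sum.remove) auto
    ultimately show ?thesis by simp
  qed
  have s2: "(\<Sum>b\<in>Kj - {a1} - {a2}. cnt c b i) \<le> 2 * card (Kj - {a1} - {a2})"
    using sum_bounded_above[of "Kj - {a1} - {a2}" "\<lambda>b. cnt c b i" 2] le2 by (simp add: mult.commute)
  have s3: "card (Kj - {a1} - {a2}) = card Kj - 2"
    using finKj a1j a2j a(5) by simp
  have c2: "2 \<le> card Kj"
  proof -
    have "{a1, a2} \<subseteq> Kj" using a1j a2j by auto
    hence "card {a1, a2} \<le> card Kj" using finKj by (rule card_mono[rotated])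
    thus ?thesis using a(5) by simp
  qed
  have Dle: "card D + 2 \<le> 2 * card Kj" using cardD s1 s2 s3 c2 a(6,7) by linarith
  define d where "d y = (LEAST n. (kr c i j ^^ n) x y)" for y
  have "\<forall>y\<in>?K - {x}. \<exists>p. p \<in> ?K \<and> kr c i j p y \<and> d p < d y"
  proof
    fix y assume y: "y \<in> ?K - {x}"
    hence "(kr c i j)\<^sup>*\<^sup>* x y" "y \<noteq> x" by (auto simp: kc_def)
    from parent_ex[OF this] show "\<exists>p. p \<in> ?K \<and> kr c i j p y \<and> d p < d y"
      unfolding d_def kc_def by blast
  qed
  then obtain par where par: "\<And>y. y \<in> ?K - {x} \<Longrightarrow> par y \<in> ?K \<and> kr c i j (par y) y \<and> d (par y) < d y"
    by metis
  define \<phi> where "\<phi> y = (if c y = j then (y, par y) else (par y, y))" for y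
  have img: "\<phi> ` (?K - {x}) \<subseteq> D"
  proof
    fix z assume "z \<in> \<phi> ` (?K - {x})"
    then obtain y where y: "y \<in> ?K - {x}" "z = \<phi> y" by blast
    have p: "par y \<in> ?K" "kr c i j (par y) y" using par[OF y(1)] by auto
    have yS: "y \<in> Sp" "par y \<in> Sp" "R (par y) y" using p(2) by (auto simp: kr_def)
    have ne: "c (par y) \<noteq> c y" using c yS unfolding col_def proper_def by blast
    have cy: "c y \<in> {i, j}" "c (par y) \<in> {i, j}" using cK p(1) y(1) by auto
    show "z \<in> D"
    proof (cases "c y = j")
      case True
      hence "c (par y) = i" using ne cy by auto
      thus ?thesis using True y yS sym by (auto simp: \<phi>_def D_def Kj_def B_def cl_def)
    next
      case False
      hence "c y = i" "c (par y) = j" using ne cy by auto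
      thus ?thesis using False y yS p(1) by (auto simp: \<phi>_def D_def Kj_def B_def cl_def)
    qed
  qed
  have inj: "inj_on \<phi> (?K - {x})"
  proof (rule inj_onI)
    fix y1 y2 assume y: "y1 \<in> ?K - {x}" "y2 \<in> ?K - {x}" "\<phi> y1 = \<phi> y2"
    have d1: "d (par y1) < d y1" and d2: "d (par y2) < d y2" using par y(1,2) by auto
    show "y1 = y2"
    proof (cases "c y1 = j"; cases "c y2 = j")
      assume "c y1 = j" "c y2 = j" thus ?thesis using y(3) by (simp add: \<phi>_def)
    next
      assume "c y1 \<noteq> j" "c y2 \<noteq> j" thus ?thesis using y(3) by (simp add: \<phi>_def)
    next
      assume h: "c y1 = j" "c y2 \<noteq> j"
      hence "y1 = par y2" "par y1 = y2" using y(3) by (auto simp: \<phi>_def)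
      thus ?thesis using d1 d2 by simp
    next
      assume h: "c y1 \<noteq> j" "c y2 = j"
      hence "par y1 = y2" "y1 = par y2" using y(3) by (auto simp: \<phi>_def)
      thus ?thesis using d1 d2 by simp
    qed
  qed
  have "card (?K - {x}) \<le> card D" using card_inj_on_le[OF inj img finD] .
  moreover have "card (?K - {x}) = card ?K - 1" using finK kc_self[of x c i j] by simp
  ultimately show False using Dle cardK bal c2 by linarith
qed

lemma F9:
  assumes c: "col c" and col3: "i < 6" "j < 6" "k' < 6" "i \<noteq> j" "j \<noteq> k'" "i \<noteq> k'"
    and w: "w \<in> Sp" "c w = j" "w \<noteq> nv c j"
    and r1: "(kr c i j)\<^sup>*\<^sup>* w (nv c j)" and r2: "(kr c k' j)\<^sup>*\<^sup>* w (nv c j)"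
  shows False
proof -
  have nvj: "nv c j \<in> nb R v" "c (nv c j) = j" using nv_prop[OF c col3(2)] by auto
  have nvS: "nv c j \<in> Sp" using nvj nbv_Sp by auto
  have h: "2 \<le> cnt c w l" if l: "l < 6" "l \<noteq> j" and r: "(kr c l j)\<^sup>*\<^sup>* w (nv c j)" for l
  proof (rule ccontr)
    assume "\<not> 2 \<le> cnt c w l"
    moreover have "1 \<le> cnt c w l" using cnt_ge1[OF c w(1) l(1)] l(2) w(2) by simp
    ultimately have one: "cnt c w l = 1" by simp
    have "cnt c (nv c j) l = 1" using F5c[OF c nvj(1) l(1)] l(2) nvj(2) by simp
    moreover have "w \<in> kc c l j (nv c j)" using rt_sym[OF r] by (simp add: kc_def)
    moreover have "nv c j \<in> kc c l j (nv c j)" by (rule kc_self)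
    ultimately show False
      using path[OF c l(1) col3(2) l(2) nvS, of w "nv c j"] nvj(2) w(2,3) one by simp
  qed
  have "2 \<le> cnt c w i" using h[OF col3(1,4) r1] .
  moreover have "2 \<le> cnt c w k'" using h[OF col3(3)] col3(5) r2 by simp
  ultimately show False using F5b[OF c w(1) col3(1) _ col3(3) _ col3(6)] col3(4,5) w(2) by auto
qed

end


context kempe begin

lemma kempe_main:
  assumes x0: "x0 \<in> nb R v" and y0: "y0 \<in> nb R v" and ne: "x0 \<noteq> y0" and nadj: "\<not> R x0 y0"
  shows False
proof -
  obtain c where c0: "\<forall>x\<in>C - {v}. c x < 6" "proper R (C - {v}) c" using colour_minus[OF vC] by blast
  have c: "col c" using c0 by (simp add: col_def Sp_def)
  have x0S: "x0 \<in> Sp" and y0S: "y0 \<in> Sp" using x0 y0 nbv_Sp by auto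
  define i where "i = c x0"
  define j where "j = c y0"
  have i6: "i < 6" and j6: "j < 6" using c x0S y0S by (auto simp: col_def i_def j_def)
  have ij: "i \<noteq> j" using nv_inj[OF c x0 y0] ne by (auto simp: i_def j_def)
  have nvi: "nv c i = x0" using nv_eq[OF c x0] by (simp add: i_def)
  have nvj: "nv c j = y0" using nv_eq[OF c y0] by (simp add: j_def)
  obtain u where u: "u \<in> Sp" "R x0 u" "c u = j" using F3[OF c x0S j6] ij by (auto simp: i_def)
  have cnt1: "cnt c x0 j = 1" using F5c[OF c x0 j6] ij by (simp add: i_def)
  have uniq: "w = u" if "w \<in> Sp" "R x0 w" "c w = j" for w
  proof -
    have "card {w\<in>Sp. R x0 w \<and> c w = j} = 1" using cnt1 by (simp add: cnt_def)
    then obtain z where z: "{w\<in>Sp. R x0 w \<and> c w = j} = {z}" by (rule card_1_singletonE)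
    have "u \<in> {z}" "w \<in> {z}" using u that unfolding z[symmetric] by auto
    thus ?thesis by simp
  qed
  have uy: "u \<noteq> y0" using u(2) nadj by auto
  obtain k' where k': "k' < 6" "k' \<noteq> i" "k' \<noteq> j"
  proof -
    have "\<exists>k'\<in>{0,1,2::nat}. k' \<noteq> i \<and> k' \<noteq> j" by auto
    then obtain k' where "k' \<in> {0,1,2::nat}" "k' \<noteq> i" "k' \<noteq> j" by blast
    moreover hence "k' < 6" by auto
    ultimately show ?thesis using that by blast
  qed
  define K where "K = kc c i k' x0"
  define c' where "c' = sw c i k' K"
  have cx0: "c x0 \<in> {i, k'}" by (simp add: i_def)
  have c': "col c'" unfolding c'_def K_def by (rule sw_col[OF c x0S cx0 i6 k'(1)])
  have x0K: "x0 \<in> K" unfolding K_def by (rule kc_self)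
  have c'x0: "c' x0 = k'" using x0K by (simp add: c'_def sw_def i_def)
  have c'y0: "c' y0 = j" using ij k' by (simp add: c'_def sw_def j_def)
  have c'u: "c' u = j" using ij k' u(3) by (simp add: c'_def sw_def)
  have nv'k: "nv c' k' = x0" using nv_eq[OF c' x0 c'x0] .
  have nv'j: "nv c' j = y0" using nv_eq[OF c' y0 c'y0] .
  have A: "kr c' k' j u x0" using u x0S c'u c'x0 sym by (auto simp: kr_def)
  have "(kr c' k' j)\<^sup>*\<^sup>* (nv c' k') (nv c' j)" using F7[OF c' k'(1) j6 k'(3)] .
  hence rA: "(kr c' k' j)\<^sup>*\<^sup>* u y0" using A nv'k nv'j by (auto intro: converse_rtranclp_into_rtranclp)
  have B0: "(kr c i j)\<^sup>*\<^sup>* x0 y0" using F7[OF c i6 j6 ij] nvi nvj by simp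
  have nbx0: "z = u" if "kr c i j x0 z" for z
  proof -
    have "z \<in> Sp" "R x0 z" "c z \<in> {i, j}" using that by (auto simp: kr_def)
    moreover have "c z \<noteq> c x0" using c x0S \<open>z \<in> Sp\<close> \<open>R x0 z\<close> unfolding col_def proper_def by metis
    ultimately show ?thesis using uniq by (auto simp: i_def)
  qed
  let ?kr0 = "\<lambda>a b. kr c i j a b \<and> a \<noteq> x0 \<and> b \<noteq> x0"
  have av: "?kr0\<^sup>*\<^sup>* u y0" using avoid[of "kr c i j" x0 y0 u, OF B0] ne nbx0 by blast
  have stable: "c' a = c a" if a: "(kr c i j)\<^sup>*\<^sup>* x0 a" "a \<noteq> x0" for a
  proof -
    have "a \<in> kc c i j x0" using a(1) by (simp add: kc_def)
    moreover have "c x0 \<in> {i, j}" by (simp add: i_def)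
    ultimately have aS: "a \<in> Sp" "c a \<in> {i, j}" using kc_prop[OF x0S, of c i j a] by auto
    show ?thesis
    proof (cases "c a = j")
      case True thus ?thesis using ij k' by (simp add: c'_def sw_def)
    next
      case False
      hence ci: "c a = i" using aS by auto
      have "a \<notin> K"
      proof
        assume aK: "a \<in> K"
        have r1: "(kr c j i)\<^sup>*\<^sup>* a (nv c i)" using rt_sym[OF a(1)] nvi by (simp add: kr_comm)
        have "(kr c i k')\<^sup>*\<^sup>* x0 a" using aK by (simp add: K_def kc_def)
        hence r2: "(kr c k' i)\<^sup>*\<^sup>* a (nv c i)" using rt_sym nvi by (simp add: kr_comm)
        show False using F9[OF c j6 i6 k'(1) ij[symmetric] k'(2)[symmetric] k'(3)[symmetric] aS(1) ci]
          a(2) nvi r1 r2 by simp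
      qed
      thus ?thesis by (simp add: c'_def sw_def)
    qed
  qed
  have tr: "(kr c' i j)\<^sup>*\<^sup>* u z \<and> (kr c i j)\<^sup>*\<^sup>* x0 z" if "?kr0\<^sup>*\<^sup>* u z" for z
    using that
  proof (induction rule: rtranclp_induct)
    case base
    have "kr c i j x0 u" using x0S u sym by (auto simp: kr_def i_def)
    thus ?case by auto
  next
    case (step y z)
    have yz: "kr c i j y z" "y \<noteq> x0" "z \<noteq> x0" using step(2) by auto
    have zr: "(kr c i j)\<^sup>*\<^sup>* x0 z" using step(3) yz(1) by (auto intro: rtranclp.rtrancl_into_rtrancl)
    have "c' y = c y" "c' z = c z" using stable step(3) yz zr by auto
    hence "kr c' i j y z" using yz(1) by (simp add: kr_def)
    thus ?case using step(3) zr by (auto intro: rtranclp.rtrancl_into_rtrancl)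
  qed
  have rB: "(kr c' i j)\<^sup>*\<^sup>* u y0" using tr[OF av] by simp
  show False
    using F9[OF c' i6 j6 k'(1) ij k'(3)[symmetric] k'(2)[symmetric] u(1) c'u] uy nv'j rA rB
    by (simp add: kr_comm)
qed

end


context comp6 begin

lemma clique_closed:
  assumes reg: "\<And>x. x \<in> C \<Longrightarrow> card (nb R x) = 6" and vC: "v \<in> C"
    and cliq: "\<forall>x\<in>nb R v. \<forall>y\<in>nb R v. x \<noteq> y \<longrightarrow> R x y"
  shows "card C = 7 \<and> (\<forall>a\<in>C. \<forall>b\<in>C. a \<noteq> b \<longrightarrow> R a b)"
proof -
  let ?N = "nb R v"
  have NC: "?N \<subseteq> C" using closed[OF vC] .
  have vN: "v \<notin> ?N" using irr by (simp add: nb_def)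
  have finN: "finite ?N" using fin_nb[OF vC] .
  have nba: "nb R a = insert v (?N - {a})" if a: "a \<in> ?N" for a
  proof -
    have aC: "a \<in> C" using a NC by auto
    have sub: "insert v (?N - {a}) \<subseteq> nb R a"
    proof
      fix z assume z: "z \<in> insert v (?N - {a})"
      show "z \<in> nb R a"
      proof (cases "z = v")
        case True
        have "R v a" using a by (simp add: nb_def)
        hence "R a v" by (rule sym)
        thus ?thesis using True by (simp add: nb_def)
      next
        case False
        hence "z \<in> ?N" "z \<noteq> a" using z by auto
        hence "R a z" using cliq a by metis
        thus ?thesis by (simp add: nb_def)
      qed
    qed
    have "card (insert v (?N - {a})) = 6"
      using vN finN a reg[OF vC] by (simp add: card_insert_disjoint)
    thus ?thesis using card_subset_eq[OF fin_nb[OF aC] sub] reg[OF aC] by simp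
  qed
  have "b \<in> insert v ?N" if "R\<^sup>*\<^sup>* v b" for b
    using that
  proof (induction rule: rtranclp_induct)
    case base thus ?case by simp
  next
    case (step y z)
    show ?case
    proof (cases "y = v")
      case True thus ?thesis using step(2) by (simp add: nb_def)
    next
      case False
      hence "y \<in> ?N" using step(3) by simp
      hence "z \<in> nb R y" using step(2) by (simp add: nb_def)
      thus ?thesis using nba[OF \<open>y \<in> ?N\<close>] by auto
    qed
  qed
  hence "C \<subseteq> insert v ?N" using conn vC by (meson subsetI)
  moreover have "insert v ?N \<subseteq> C" using NC vC by auto
  ultimately have Ceq: "C = insert v ?N" by blast
  have "card C = 7" unfolding Ceq using vN finN reg[OF vC] by simp
  moreover have "\<forall>a\<in>C. \<forall>b\<in>C. a \<noteq> b \<longrightarrow> R a b"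
  proof (intro ballI impI)
    fix a b assume ab: "a \<in> C" "b \<in> C" "a \<noteq> b"
    hence "a \<in> insert v ?N" "b \<in> insert v ?N" using Ceq by auto
    thus "R a b" using ab(3) cliq sym[of v a] unfolding nb_def by blast
  qed
  ultimately show ?thesis ..
qed

lemma regular_case:
  assumes reg: "\<And>x. x \<in> C \<Longrightarrow> card (nb R x) = 6" and ne: "C \<noteq> {}"
  shows "(\<exists>I\<subseteq>C. indep R I \<and> card C \<le> 6 * card I) \<or> (card C = 7 \<and> (\<forall>a\<in>C. \<forall>b\<in>C. a \<noteq> b \<longrightarrow> R a b))"
proof (cases "\<exists>I\<subseteq>C. indep R I \<and> card C \<le> 6 * card I")
  case True thus ?thesis ..
next
  case False
  obtain v0 where v0: "v0 \<in> C" using ne by auto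
  obtain I0 where I0: "I0 \<subseteq> C" "indep R I0" "card C \<le> 6 * card I0 + 1" using minus_one[OF v0] by blast
  have "\<not> card C \<le> 6 * card I0" using False I0(1,2) by blast
  hence cC: "card C = 6 * card I0 + 1" using I0(3) by linarith
  have NI: "card I \<le> card I0" if "I \<subseteq> C" "indep R I" for I
  proof (rule ccontr)
    assume "\<not> card I \<le> card I0"
    hence "card C \<le> 6 * card I" using cC by simp
    thus False using False that by blast
  qed
  have cliq: "\<forall>x\<in>nb R v0. \<forall>y\<in>nb R v0. x \<noteq> y \<longrightarrow> R x y"
  proof (rule ccontr)
    assume "\<not> ?thesis"
    then obtain x y where xy: "x \<in> nb R v0" "y \<in> nb R v0" "x \<noteq> y" "\<not> R x y" by blast
    have "kempe R C v0 (card I0)"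
      by (intro kempe.intro comp6_axioms kempe_axioms.intro reg v0 cC NI) auto
    from kempe.kempe_main[OF this xy] show False .
  qed
  show ?thesis using clique_closed[OF reg v0 cliq] ..
qed

lemma component_bound:
  assumes ne: "C \<noteq> {}"
  shows "(\<exists>I\<subseteq>C. indep R I \<and> card C \<le> 6 * card I) \<or>
    ((\<forall>x\<in>C. card (nb R x) = 6) \<and> card C = 7 \<and> (\<forall>a\<in>C. \<forall>b\<in>C. a \<noteq> b \<longrightarrow> R a b))"
proof (cases "\<exists>r\<in>C. card (nb R r) < 6")
  case True
  then obtain r where "r \<in> C" "card (nb R r) < 6" by blast
  from deficient[OF this] show ?thesis by (rule disjI1)
next
  case False
  have reg: "card (nb R x) = 6" if "x \<in> C" for x
  proof -
    have "\<not> card (nb R x) < 6" using False that by blast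
    thus ?thesis using deg6[OF that] by linarith
  qed
  have "\<forall>x\<in>C. card (nb R x) = 6" using reg by blast
  thus ?thesis using regular_case[OF reg ne] by blast
qed

end


definition hn :: "'a set \<Rightarrow> ('a \<Rightarrow> 'a \<Rightarrow> bool) \<Rightarrow> 'a \<Rightarrow> 'a \<Rightarrow> bool" where
  "hn V E x y \<longleftrightarrow> x \<in> V \<and> y \<in> V \<and> x \<noteq> y \<and> (\<exists>m. E x m \<and> E y m)"

locale cg =
  fixes V :: "'a set" and E :: "'a \<Rightarrow> 'a \<Rightarrow> bool"
  assumes sg: "simple_graph V E" and cub: "cubic V E" and con: "connected_graph V E"
begin

abbreviation "H \<equiv> hn V E"

lemma finV: "finite V" using sg by (simp add: simple_graph_def)
lemma Ein: "E x y \<Longrightarrow> x \<in> V \<and> y \<in> V" using sg by (simp add: simple_graph_def)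
lemma Esym: "E x y \<Longrightarrow> E y x" using sg by (simp add: simple_graph_def)
lemma Eirr: "\<not> E x x" using sg by (simp add: simple_graph_def)
lemma nbhd3: "x \<in> V \<Longrightarrow> card (nbhd V E x) = 3" using cub by (simp add: cubic_def)
lemma nbhd_fin: "finite (nbhd V E x)" using finV by (simp add: nbhd_def)
lemma nbhd_iff: "y \<in> nbhd V E x \<longleftrightarrow> E x y" using Ein by (auto simp: nbhd_def)

lemma H_sym: "H x y \<Longrightarrow> H y x" by (auto simp: hn_def)
lemma H_irr: "\<not> H x x" by (simp add: hn_def)
lemma nbH_sub: "nb H x \<subseteq> V" by (auto simp: nb_def hn_def)

lemma H_deg: "x \<in> V \<Longrightarrow> card (nb H x) \<le> 6"
proof -
  assume xV: "x \<in> V"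
  have "nb H x \<subseteq> (\<Union>m\<in>nbhd V E x. nbhd V E m - {x})"
  proof
    fix y assume "y \<in> nb H x"
    then obtain m where m: "E x m" "E y m" "y \<noteq> x" by (auto simp: nb_def hn_def)
    have "E m y" using Esym[OF m(2)] .
    thus "y \<in> (\<Union>m\<in>nbhd V E x. nbhd V E m - {x})" using m by (auto simp: nbhd_iff)
  qed
  hence "card (nb H x) \<le> card (\<Union>m\<in>nbhd V E x. nbhd V E m - {x})"
    using nbhd_fin by (intro card_mono) auto
  also have "\<dots> \<le> (\<Sum>m\<in>nbhd V E x. card (nbhd V E m - {x}))"
    using nbhd_fin by (rule card_UN_le)
  also have "\<dots> = (\<Sum>m\<in>nbhd V E x. 2)"
  proof -
    have c2: "card (nbhd V E m - {x}) = 2" if m: "m \<in> nbhd V E x" for m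
    proof -
      have "E x m" using m nbhd_iff by blast
      hence "x \<in> nbhd V E m" "m \<in> V" using nbhd_iff Esym Ein by blast+
      thus ?thesis using nbhd3 nbhd_fin by simp
    qed
    show ?thesis by (rule sum.cong) (simp_all add: c2)
  qed
  also have "\<dots> = 6" using nbhd3[OF xV] by simp
  finally show ?thesis .
qed

lemma H_rt_sym: "H\<^sup>*\<^sup>* a b \<Longrightarrow> H\<^sup>*\<^sup>* b a"
proof (induction rule: rtranclp_induct)
  case base thus ?case by simp
next
  case (step y z)
  have "H z y" using H_sym[OF step(2)] .
  thus ?case using step(3) by (rule converse_rtranclp_into_rtranclp)
qed

lemma comp_sub: "r \<in> V \<Longrightarrow> {y. H\<^sup>*\<^sup>* r y} \<subseteq> V"
proof
  fix y assume "r \<in> V" "y \<in> {y. H\<^sup>*\<^sup>* r y}"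
  hence "H\<^sup>*\<^sup>* r y" by simp
  thus "y \<in> V" using \<open>r \<in> V\<close> by (induction rule: rtranclp_induct) (auto simp: hn_def)
qed

lemma comp6_inst: "r \<in> V \<Longrightarrow> comp6 H {y. H\<^sup>*\<^sup>* r y}"
proof (unfold_locales)
  assume r: "r \<in> V"
  show "finite {y. H\<^sup>*\<^sup>* r y}" using comp_sub[OF r] finV finite_subset by blast
  show "\<And>x y. H x y \<Longrightarrow> H y x" by (rule H_sym)
  show "\<And>x. \<not> H x x" by (rule H_irr)
  show "nb H x \<subseteq> {y. H\<^sup>*\<^sup>* r y}" if "x \<in> {y. H\<^sup>*\<^sup>* r y}" for x
  proof
    fix y assume "y \<in> nb H x"
    hence "H x y" by (simp add: nb_def)
    with that show "y \<in> {y. H\<^sup>*\<^sup>* r y}" by (simp add: rtranclp.rtrancl_into_rtrancl)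
  qed
  show "\<And>x. x \<in> {y. H\<^sup>*\<^sup>* r y} \<Longrightarrow> card (nb H x) \<le> 6" using comp_sub[OF r] H_deg by blast
  show "\<forall>a\<in>{y. H\<^sup>*\<^sup>* r y}. \<forall>b\<in>{y. H\<^sup>*\<^sup>* r y}. H\<^sup>*\<^sup>* a b"
  proof (intro ballI)
    fix a b assume "a \<in> {y. H\<^sup>*\<^sup>* r y}" "b \<in> {y. H\<^sup>*\<^sup>* r y}"
    hence "H\<^sup>*\<^sup>* a r" "H\<^sup>*\<^sup>* r b" using H_rt_sym by auto
    thus "H\<^sup>*\<^sup>* a b" by (rule rtranclp_trans)
  qed
qed

lemma cross:
  assumes "E a b" "H\<^sup>*\<^sup>* a y" "E y z"
  shows "H\<^sup>*\<^sup>* b z"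
  using assms(2,3)
proof (induction arbitrary: z rule: rtranclp_induct)
  case base
  show ?case
  proof (cases "z = b")
    case True thus ?thesis by simp
  next
    case False
    have "E b a" "E z a" using Esym assms(1) base by auto
    hence "H b z" unfolding hn_def using False Ein by blast
    thus ?thesis by simp
  qed
next
  case (step w y)
  obtain t where t: "E w t" "E y t" using step(2) by (auto simp: hn_def)
  have bt: "H\<^sup>*\<^sup>* b t" using step(3)[OF t(1)] .
  show ?case
  proof (cases "z = t")
    case True thus ?thesis using bt by simp
  next
    case False
    have "E t y" "E z y" using Esym t(2) step(4) by auto
    hence "H t z" unfolding hn_def using False Ein by blast
    with bt show ?thesis by (rule rtranclp.rtrancl_into_rtrancl)
  qed
qed

lemma even_card: "even (card V)"
proof -
  define D where "D = {(u, w). u \<in> V \<and> w \<in> V \<and> E u w}"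
  have D_eq: "D = Sigma V (nbhd V E)" by (auto simp: D_def nbhd_def)
  have finD: "finite D" unfolding D_eq using finV nbhd_fin by auto
  have "card D = (\<Sum>u\<in>V. card (nbhd V E u))" unfolding D_eq using finV nbhd_fin by (simp add: card_SigmaI)
  also have "\<dots> = 3 * card V" using nbhd3 by simp
  finally have cD: "card D = 3 * card V" .
  define P where "P = (\<lambda>(u, w). {(u, w), (w, u)}) ` D"
  have "2 * card P = card (\<Union>P)"
  proof (rule card_partition)
    show "finite P" unfolding P_def using finD by simp
    show "finite (\<Union>P)" unfolding P_def using finD by auto
    show "card c = 2" if cP: "c \<in> P" for c
    proof -
      obtain z where z: "z \<in> D" "c = (\<lambda>(u, w). {(u, w), (w, u)}) z" using cP by (auto simp: P_def)
      obtain u w where "z = (u, w)" by (cases z)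
      hence uw: "c = {(u, w), (w, u)}" "E u w" using z by (auto simp: D_def)
      have "u \<noteq> w" using uw(2) Eirr by metis
      thus ?thesis using uw(1) by simp
    qed
    show "c1 \<inter> c2 = {}" if cc: "c1 \<in> P" "c2 \<in> P" "c1 \<noteq> c2" for c1 c2
    proof -
      obtain u w where uw: "c1 = {(u, w), (w, u)}" using cc(1) by (auto simp: P_def)
      obtain p q where pq: "c2 = {(p, q), (q, p)}" using cc(2) by (auto simp: P_def)
      show ?thesis using cc(3) unfolding uw pq by auto
    qed
  qed
  moreover have "\<Union>P = D"
  proof
    show "\<Union>P \<subseteq> D" unfolding P_def D_def using Esym by blast
    show "D \<subseteq> \<Union>P" unfolding P_def by blast
  qed
  ultimately have "even (card D)" by (metis dvd_triv_left)
  thus ?thesis using cD by simp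
qed

end


locale hw = cg +
  fixes P L
  assumes PL: "V = P \<union> L" and disj: "P \<inter> L = {}" and bip: "\<And>a b. E a b \<Longrightarrow> (a \<in> P \<longleftrightarrow> b \<in> L)"
    and cP: "card P = 7" and cliq: "\<forall>a\<in>P. \<forall>b\<in>P. a \<noteq> b \<longrightarrow> H a b"
    and reg: "\<forall>x\<in>P. card (nb H x) = 6"
begin

lemma PV: "P \<subseteq> V" and LV: "L \<subseteq> V" using PL by auto
lemma finP: "finite P" using PV finV finite_subset by blast

lemma EPL: "E x y \<Longrightarrow> x \<in> P \<Longrightarrow> y \<in> L" using bip by blast
lemma ELP: "E x y \<Longrightarrow> x \<in> L \<Longrightarrow> y \<in> P"
proof -
  assume a: "E x y" "x \<in> L"
  hence "x \<notin> P" using disj by auto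
  hence "y \<notin> L" using bip[OF a(1)] by simp
  thus "y \<in> P" using Ein[OF a(1)] PL by auto
qed

lemma nbhd_minus: "E p l \<Longrightarrow> card (nbhd V E l - {p}) = 2"
proof -
  assume a: "E p l"
  hence "p \<in> nbhd V E l" "l \<in> V" using nbhd_iff Esym Ein by blast+
  thus ?thesis using nbhd3 nbhd_fin by simp
qed

lemma uniq_line:
  assumes pq: "p \<in> P" "q \<in> P" "p \<noteq> q" and e: "E p l1" "E q l1" "E p l2" "E q l2"
  shows "l1 = l2"
proof (rule ccontr)
  assume ne: "l1 \<noteq> l2"
  let ?N = "nbhd V E p"
  have pV: "p \<in> V" using pq PV by auto
  have l12: "l1 \<in> ?N" "l2 \<in> ?N" using e nbhd_iff by auto
  have "card (?N - {l1, l2}) = 1" using nbhd3[OF pV] nbhd_fin l12 ne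
    by (simp add: card_Diff_subset)
  then obtain l3 where l3: "?N - {l1, l2} = {l3}" by (rule card_1_singletonE)
  have Neq: "?N = {l1, l2, l3}" using l3 l12 by auto
  have l3e: "E p l3" using l3 nbhd_iff by auto
  define A where "A l = nbhd V E l - {p}" for l
  have sub: "nb H p \<subseteq> (A l1 \<union> A l2) \<union> A l3"
  proof
    fix y assume "y \<in> nb H p"
    then obtain m where m: "E p m" "E y m" "y \<noteq> p" by (auto simp: nb_def hn_def)
    have "m \<in> ?N" using m(1) nbhd_iff by auto
    moreover have "y \<in> A m" using m Esym nbhd_iff by (auto simp: A_def)
    ultimately show "y \<in> (A l1 \<union> A l2) \<union> A l3" using Neq by auto
  qed
  have cA: "card (A l1) = 2" "card (A l2) = 2" "card (A l3) = 2"
    using nbhd_minus e(1,3) l3e by (auto simp: A_def)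
  have finA: "finite (A l)" for l using nbhd_fin by (simp add: A_def)
  have "q \<in> A l1 \<inter> A l2" using e pq Esym nbhd_iff by (auto simp: A_def)
  hence "1 \<le> card (A l1 \<inter> A l2)" using finA by (metis One_nat_def Suc_leI card_gt_0_iff empty_iff finite_Int)
  moreover have "card (A l1) + card (A l2) = card (A l1 \<union> A l2) + card (A l1 \<inter> A l2)"
    by (rule card_Un_Int[OF finA finA])
  ultimately have c12: "card (A l1 \<union> A l2) \<le> 3" using cA by linarith
  have "card (nb H p) \<le> card ((A l1 \<union> A l2) \<union> A l3)" using sub finA by (intro card_mono) auto
  also have "\<dots> \<le> card (A l1 \<union> A l2) + card (A l3)" by (rule card_Un_le)
  finally have "card (nb H p) \<le> 5" using c12 cA by linarith
  thus False using reg pq by auto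
qed

definition col :: "'a \<Rightarrow> 'a \<Rightarrow> 'a \<Rightarrow> bool" where
  "col p q r \<longleftrightarrow> p \<in> P \<and> q \<in> P \<and> r \<in> P \<and> p \<noteq> q \<and> p \<noteq> r \<and> q \<noteq> r \<and> (\<exists>l. E p l \<and> E q l \<and> E r l)"

lemma col_sw1: "col p q r \<Longrightarrow> col q p r" unfolding col_def by blast
lemma col_sw2: "col p q r \<Longrightarrow> col p r q" unfolding col_def by blast
lemma col_ne: "col p q r \<Longrightarrow> p \<noteq> q \<and> p \<noteq> r \<and> q \<noteq> r" unfolding col_def by blast
lemma col_P: "col p q r \<Longrightarrow> p \<in> P \<and> q \<in> P \<and> r \<in> P" unfolding col_def by blast

lemma ax1:
  assumes "p \<in> P" "q \<in> P" "p \<noteq> q"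
  shows "\<exists>r. col p q r"
proof -
  obtain m where m: "E p m" "E q m" using cliq assms by (auto simp: hn_def)
  have mL: "m \<in> L" using EPL[OF m(1)] assms(1) .
  have mV: "m \<in> V" using mL LV by auto
  have pq: "p \<in> nbhd V E m" "q \<in> nbhd V E m" using m Esym nbhd_iff by auto
  have "card (nbhd V E m - {p, q}) = 1"
    using nbhd3[OF mV] nbhd_fin pq assms(3) by (simp add: card_Diff_subset)
  then obtain r where r: "nbhd V E m - {p, q} = {r}" by (rule card_1_singletonE)
  have rm: "E m r" "r \<noteq> p" "r \<noteq> q" using r nbhd_iff by auto
  have rP: "r \<in> P" using ELP[OF rm(1) mL] .
  have "col p q r" unfolding col_def using assms rm rP m Esym[OF rm(1)] by blast
  thus ?thesis ..
qed

lemma ax2: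
  assumes "col p q r" "col p q s"
  shows "r = s"
proof (rule ccontr)
  assume rs: "r \<noteq> s"
  obtain l1 where l1: "E p l1" "E q l1" "E r l1" using assms(1) by (auto simp: col_def)
  obtain l2 where l2: "E p l2" "E q l2" "E s l2" using assms(2) by (auto simp: col_def)
  have "l1 = l2" using uniq_line[of p q l1 l2] assms l1 l2 by (auto simp: col_def)
  hence sub: "{p, q, r, s} \<subseteq> nbhd V E l1" using l1 l2 Esym nbhd_iff by auto
  have l1V: "l1 \<in> V" using Ein[OF l1(1)] by simp
  have "card {p, q, r, s} = 4" using assms rs by (auto simp: col_def)
  moreover have "card {p, q, r, s} \<le> card (nbhd V E l1)" using sub nbhd_fin by (rule card_mono[rotated])
  ultimately show False using nbhd3[OF l1V] by simp
qed

end


context hw begin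

lemma col_all: "col p q r \<Longrightarrow> col q p r \<and> col p r q \<and> col r p q \<and> col q r p \<and> col r q p"
  using col_sw1 col_sw2 by metis

lemma construct:
  "\<exists>p0 p1 p2 p3 p4 p5 p6. col p0 p1 p3 \<and> col p1 p2 p4 \<and> col p2 p3 p5 \<and> col p3 p4 p6 \<and>
     col p4 p5 p0 \<and> col p5 p6 p1 \<and> col p6 p0 p2 \<and> distinct [p0, p1, p2, p3, p4, p5, p6] \<and>
     P = {p0, p1, p2, p3, p4, p5, p6}"
proof -
  have "P \<noteq> {}" using cP by auto
  then obtain p0 where p0: "p0 \<in> P" by auto
  have "card (P - {p0}) = 6" using cP p0 finP by simp
  hence "P - {p0} \<noteq> {}" by (metis card.empty zero_neq_numeral)
  then obtain p1 where p1: "p1 \<in> P" "p1 \<noteq> p0" by auto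
  obtain p3 where c013: "col p0 p1 p3" using ax1[OF p0 p1(1)] p1(2) by auto
  have sub3: "{p0, p1, p3} \<subseteq> P" using p0 p1 col_P[OF c013] by auto
  have "card {p0, p1, p3} = 3" using col_ne[OF c013] by simp
  hence "card (P - {p0, p1, p3}) \<ge> 4" using cP card_Diff_subset[OF _ sub3] by simp
  hence "P - {p0, p1, p3} \<noteq> {}" by (metis card.empty not_numeral_le_zero)
  then obtain p2 where p2: "p2 \<in> P" "p2 \<noteq> p0" "p2 \<noteq> p1" "p2 \<noteq> p3" by auto
  have n012: "\<not> col p0 p1 p2" using ax2[OF c013] p2(4) by blast
  obtain p4 where c124: "col p1 p2 p4" using ax1[OF p1(1) p2(1)] p2(3) by auto
  obtain p5 where c235: "col p2 p3 p5" using ax1[OF p2(1), of p3] p2(4) col_P[OF c013] by auto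
  have p34: "p3 \<noteq> p4"
  proof
    assume "p3 = p4"
    hence "col p1 p3 p2" using col_all[OF c124] by simp
    moreover have "col p1 p3 p0" using col_all[OF c013] by simp
    ultimately show False using ax2 p2(2) by blast
  qed
  obtain p6 where c346: "col p3 p4 p6" using ax1[of p3 p4] p34 col_P[OF c013] col_P[OF c124] by auto
  note cs = col_all[OF c013] col_all[OF c124] col_all[OF c235] col_all[OF c346] c013 c124 c235 c346
  have d1: "p4 \<noteq> p0" using cs n012 ax2 col_all by metis
  have d2: "p4 \<noteq> p3" using p34 by simp
  have d3: "p5 \<noteq> p0" using cs p2 ax2 by metis
  have d4: "p5 \<noteq> p1" using cs p2 ax2 by metis
  have d5: "p5 \<noteq> p4" using cs p2 ax2 col_ne by metis
  have d6: "p6 \<noteq> p0" using cs p2 d1 ax2 col_ne by metis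
  have d7: "p6 \<noteq> p1" using cs p2 ax2 col_ne by metis
  have d8: "p6 \<noteq> p2" using cs p2 ax2 col_ne by metis
  have d9: "p6 \<noteq> p5" using cs p2 d5 ax2 col_ne by metis
  have dist: "distinct [p0, p1, p2, p3, p4, p5, p6]"
    using d1 d2 d3 d4 d5 d6 d7 d8 d9 p1 p2 col_ne[OF c013] col_ne[OF c124] col_ne[OF c235] col_ne[OF c346]
    by auto
  have sub: "{p0, p1, p2, p3, p4, p5, p6} \<subseteq> P" using col_P c013 c124 c235 c346 by auto
  have "card {p0, p1, p2, p3, p4, p5, p6} = 7" using distinct_card[OF dist] by (simp only: set_simps) simp
  hence Peq: "P = {p0, p1, p2, p3, p4, p5, p6}" using card_subset_eq[OF finP sub] cP by simp
  have ex: "\<And>x y r s. col x y r \<Longrightarrow> col x y s \<Longrightarrow> r \<noteq> s \<Longrightarrow> False" using ax2 by blast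
  have inP: "\<And>r. r \<in> P \<Longrightarrow> r = p0 \<or> r = p1 \<or> r = p2 \<or> r = p3 \<or> r = p4 \<or> r = p5 \<or> r = p6"
    unfolding Peq by auto
  have dd: "p0 \<noteq> p1" "p0 \<noteq> p2" "p0 \<noteq> p3" "p0 \<noteq> p4" "p0 \<noteq> p5" "p0 \<noteq> p6"
    "p1 \<noteq> p2" "p1 \<noteq> p3" "p1 \<noteq> p4" "p1 \<noteq> p5" "p1 \<noteq> p6" "p2 \<noteq> p3" "p2 \<noteq> p4"
    "p2 \<noteq> p5" "p2 \<noteq> p6" "p3 \<noteq> p4" "p3 \<noteq> p5" "p3 \<noteq> p6" "p4 \<noteq> p5" "p4 \<noteq> p6" "p5 \<noteq> p6"
    using dist by auto
  obtain r1 where r1: "col p4 p5 r1" using ax1[of p4 p5] dd sub by auto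
  have c450: "col p4 p5 p0"
  proof -
    have "r1 \<in> P" using col_P[OF r1] by simp
    moreover have "r1 \<noteq> p4" "r1 \<noteq> p5" using col_ne[OF r1] by auto
    moreover have "r1 \<noteq> p1" using ex[of p1 p4 p5 p2] col_all[OF r1] col_all[OF c124] dd c013 c124 c235 c346 by auto
    moreover have "r1 \<noteq> p2" using ex[of p2 p5 p4 p3] col_all[OF r1] col_all[OF c235] dd c013 c124 c235 c346 by auto
    moreover have "r1 \<noteq> p3" using ex[of p3 p4 p5 p6] col_all[OF r1] col_all[OF c346] dd c013 c124 c235 c346 by auto
    moreover have "r1 \<noteq> p6" using ex[of p4 p6 p5 p3] col_all[OF r1] col_all[OF c346] dd c013 c124 c235 c346 by auto
    ultimately have "r1 = p0" using inP by blast
    thus ?thesis using r1 by simp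
  qed
  obtain r2 where r2: "col p5 p6 r2" using ax1[of p5 p6] dd sub by auto
  have c561: "col p5 p6 p1"
  proof -
    have "r2 \<in> P" using col_P[OF r2] by simp
    moreover have "r2 \<noteq> p5" "r2 \<noteq> p6" using col_ne[OF r2] by auto
    moreover have "r2 \<noteq> p0" using ex[of p0 p5 p6 p4] col_all[OF r2] col_all[OF c450] dd c013 c124 c235 c346 c450 by auto
    moreover have "r2 \<noteq> p2" using ex[of p5 p2 p6 p3] col_all[OF r2] col_all[OF c235] dd c013 c124 c235 c346 c450 by auto
    moreover have "r2 \<noteq> p3" using ex[of p3 p6 p5 p4] col_all[OF r2] col_all[OF c346] dd c013 c124 c235 c346 c450 by auto
    moreover have "r2 \<noteq> p4" using ex[of p4 p5 p6 p0] col_all[OF r2] col_all[OF c450] dd c013 c124 c235 c346 c450 by auto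
    ultimately have "r2 = p1" using inP by blast
    thus ?thesis using r2 by simp
  qed
  obtain r3 where r3: "col p6 p0 r3" using ax1[of p6 p0] dd sub by auto
  have c602: "col p6 p0 p2"
  proof -
    have "r3 \<in> P" using col_P[OF r3] by simp
    moreover have "r3 \<noteq> p6" "r3 \<noteq> p0" using col_ne[OF r3] by auto
    moreover have "r3 \<noteq> p1" using ex[of p0 p1 p6 p3] col_all[OF r3] col_all[OF c013] dd c013 c124 c235 c346 c450 c561 by auto
    moreover have "r3 \<noteq> p3" using ex[of p3 p6 p0 p4] col_all[OF r3] col_all[OF c346] dd c013 c124 c235 c346 c450 c561 by auto
    moreover have "r3 \<noteq> p4" using ex[of p4 p0 p6 p5] col_all[OF r3] col_all[OF c450] dd c013 c124 c235 c346 c450 c561 by auto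
    moreover have "r3 \<noteq> p5" using ex[of p5 p6 p0 p1] col_all[OF r3] col_all[OF c561] dd c013 c124 c235 c346 c450 c561 by auto
    ultimately have "r3 = p2" using inP by blast
    thus ?thesis using r3 by simp
  qed
  show ?thesis using c013 c124 c235 c346 c450 c561 c602 dist Peq by blast
qed

end


context hw begin

lemma ln_ex: "col x y z \<Longrightarrow> \<exists>l. E x l \<and> E y l \<and> E z l" unfolding col_def by blast

definition "ln x y z = (SOME l. E x l \<and> E y l \<and> E z l)"

lemma ln_prop: "col x y z \<Longrightarrow> E x (ln x y z) \<and> E y (ln x y z) \<and> E z (ln x y z)"
  unfolding ln_def by (rule someI_ex) (rule ln_ex)

lemma ln_nb: assumes "col x y z" shows "nbhd V E (ln x y z) = {x, y, z}"
proof -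
  have e: "E x (ln x y z)" "E y (ln x y z)" "E z (ln x y z)" using ln_prop[OF assms] by auto
  have sub: "{x, y, z} \<subseteq> nbhd V E (ln x y z)" using e Esym nbhd_iff by auto
  have lV: "ln x y z \<in> V" using Ein[OF e(1)] by simp
  have "card {x, y, z} = 3" using col_ne[OF assms] by simp
  thus ?thesis using card_subset_eq[OF nbhd_fin sub] nbhd3[OF lV] by simp
qed

lemma ln_E: assumes "col x y z" "w \<in> V" shows "E w (ln x y z) \<longleftrightarrow> w = x \<or> w = y \<or> w = z"
proof -
  have "E w (ln x y z) \<longleftrightarrow> w \<in> nbhd V E (ln x y z)" using nbhd_iff Esym by blast
  thus ?thesis using ln_nb[OF assms(1)] by simp
qed

lemma ln_L: "col x y z \<Longrightarrow> ln x y z \<in> L"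
  using ln_prop EPL col_P by blast

lemma PP: "x \<in> P \<Longrightarrow> y \<in> P \<Longrightarrow> \<not> E x y" using EPL disj by blast
lemma LL: "x \<in> L \<Longrightarrow> y \<in> L \<Longrightarrow> \<not> E x y" using ELP disj by blast

lemma heawood: "is_heawood V E"
proof -
  obtain p0 p1 p2 p3 p4 p5 p6 where
    c: "col p0 p1 p3" "col p1 p2 p4" "col p2 p3 p5" "col p3 p4 p6" "col p4 p5 p0" "col p5 p6 p1" "col p6 p0 p2"
    and dist: "distinct [p0, p1, p2, p3, p4, p5, p6]" and Peq: "P = {p0, p1, p2, p3, p4, p5, p6}"
    using construct by blast
  have dd: "p0 \<noteq> p1" "p0 \<noteq> p2" "p0 \<noteq> p3" "p0 \<noteq> p4" "p0 \<noteq> p5" "p0 \<noteq> p6"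
    "p1 \<noteq> p2" "p1 \<noteq> p3" "p1 \<noteq> p4" "p1 \<noteq> p5" "p1 \<noteq> p6" "p2 \<noteq> p3" "p2 \<noteq> p4"
    "p2 \<noteq> p5" "p2 \<noteq> p6" "p3 \<noteq> p4" "p3 \<noteq> p5" "p3 \<noteq> p6" "p4 \<noteq> p5" "p4 \<noteq> p6" "p5 \<noteq> p6"
    using dist by auto
  have pP: "p0 \<in> P" "p1 \<in> P" "p2 \<in> P" "p3 \<in> P" "p4 \<in> P" "p5 \<in> P" "p6 \<in> P" using Peq by auto
  have pV: "p0 \<in> V" "p1 \<in> V" "p2 \<in> V" "p3 \<in> V" "p4 \<in> V" "p5 \<in> V" "p6 \<in> V" using pP PV by auto


  define l0 where "l0 = ln p0 p1 p3"
  define l1 where "l1 = ln p1 p2 p4"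
  define l2 where "l2 = ln p2 p3 p5"
  define l3 where "l3 = ln p3 p4 p6"
  define l4 where "l4 = ln p4 p5 p0"
  define l5 where "l5 = ln p5 p6 p1"
  define l6 where "l6 = ln p6 p0 p2"
  have lL: "l0 \<in> L" "l1 \<in> L" "l2 \<in> L" "l3 \<in> L" "l4 \<in> L" "l5 \<in> L" "l6 \<in> L"
    using ln_L c by (auto simp: l0_def l1_def l2_def l3_def l4_def l5_def l6_def)
  have lV: "l0 \<in> V" "l1 \<in> V" "l2 \<in> V" "l3 \<in> V" "l4 \<in> V" "l5 \<in> V" "l6 \<in> V"
    using lL LV by auto
  have tab: "E p0 l0" "E p1 l0" "\<not> E p2 l0" "E p3 l0" "\<not> E p4 l0" "\<not> E p5 l0" "\<not> E p6 l0" "\<not> E p0 l1" "E p1 l1" "E p2 l1" "\<not> E p3 l1" "E p4 l1" "\<not> E p5 l1" "\<not> E p6 l1" "\<not> E p0 l2" "\<not> E p1 l2" "E p2 l2" "E p3 l2" "\<not> E p4 l2" "E p5 l2" "\<not> E p6 l2" "\<not> E p0 l3" "\<not> E p1 l3" "\<not> E p2 l3" "E p3 l3" "E p4 l3" "\<not> E p5 l3" "E p6 l3" "E p0 l4" "\<not> E p1 l4" "\<not> E p2 l4" "\<not> E p3 l4" "E p4 l4" "E p5 l4" "\<not> E p6 l4" "\<not> E p0 l5" "E p1 l5" "\<not> E p2 l5" "\<not> E p3 l5" "\<not> E p4 l5" "E p5 l5" "E p6 l5" "E p0 l6" "\<not> E p1 l6" "E p2 l6" "\<not> E p3 l6" "\<not>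 E p4 l6" "\<not> E p5 l6" "E p6 l6"
    using dd pV ln_E[OF c(1)] ln_E[OF c(2)] ln_E[OF c(3)] ln_E[OF c(4)] ln_E[OF c(5)] ln_E[OF c(6)] ln_E[OF c(7)] by (simp_all add: l0_def l1_def l2_def l3_def l4_def l5_def l6_def)
  have tabs: "E l0 p0" "E l0 p1" "\<not> E l0 p2" "E l0 p3" "\<not> E l0 p4" "\<not> E l0 p5" "\<not> E l0 p6" "\<not> E l1 p0" "E l1 p1" "E l1 p2" "\<not> E l1 p3" "E l1 p4" "\<not> E l1 p5" "\<not> E l1 p6" "\<not> E l2 p0" "\<not> E l2 p1" "E l2 p2" "E l2 p3" "\<not> E l2 p4" "E l2 p5" "\<not> E l2 p6" "\<not> E l3 p0" "\<not> E l3 p1" "\<not> E l3 p2" "E l3 p3" "E l3 p4" "\<not> E l3 p5" "E l3 p6" "E l4 p0" "\<not> E l4 p1" "\<not> E l4 p2" "\<not> E l4 p3" "E l4 p4" "E l4 p5" "\<not> E l4 p6" "\<not> E l5 p0" "E l5 p1" "\<not> E l5 p2" "\<not> E l5 p3" "\<not> E l5 p4" "E l5 p5" "E l5 p6" "E l6 p0" "\<not> E l6 p1" "E l6 p2" "\<not> E l6 p3" "\<not> E l6 p4" "\<not> E l6 p5" "E l6 p6"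
    using tab Esym by blast+
  have ldist: "l0 \<noteq> l1" "l0 \<noteq> l2" "l0 \<noteq> l3" "l0 \<noteq> l4" "l0 \<noteq> l5" "l0 \<noteq> l6" "l1 \<noteq> l2" "l1 \<noteq> l3" "l1 \<noteq> l4" "l1 \<noteq> l5" "l1 \<noteq> l6" "l2 \<noteq> l3" "l2 \<noteq> l4" "l2 \<noteq> l5" "l2 \<noteq> l6" "l3 \<noteq> l4" "l3 \<noteq> l5" "l3 \<noteq> l6" "l4 \<noteq> l5" "l4 \<noteq> l6" "l5 \<noteq> l6"
  proof -
    show "l0 \<noteq> l1" using tab(3) tab(10) by auto
    show "l0 \<noteq> l2" using tab(3) tab(17) by auto
    show "l0 \<noteq> l3" using tab(5) tab(26) by auto
    show "l0 \<noteq> l4" using tab(5) tab(33) by auto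
    show "l0 \<noteq> l5" using tab(6) tab(41) by auto
    show "l0 \<noteq> l6" using tab(7) tab(49) by auto
    show "l1 \<noteq> l2" using tab(11) tab(18) by auto
    show "l1 \<noteq> l3" using tab(11) tab(25) by auto
    show "l1 \<noteq> l4" using tab(13) tab(34) by auto
    show "l1 \<noteq> l5" using tab(13) tab(41) by auto
    show "l1 \<noteq> l6" using tab(14) tab(49) by auto
    show "l2 \<noteq> l3" using tab(19) tab(26) by auto
    show "l2 \<noteq> l4" using tab(19) tab(33) by auto
    show "l2 \<noteq> l5" using tab(21) tab(42) by auto
    show "l2 \<noteq> l6" using tab(21) tab(49) by auto
    show "l3 \<noteq> l4" using tab(27) tab(34) by auto
    show "l3 \<noteq> l5" using tab(27) tab(41) by auto
    show "l3 \<noteq> l6" using tab(22) tab(43) by auto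
    show "l4 \<noteq> l5" using tab(35) tab(42) by auto
    show "l4 \<noteq> l6" using tab(35) tab(49) by auto
    show "l5 \<noteq> l6" using tab(36) tab(43) by auto
  qed
  have pl: "p0 \<noteq> l0" "p0 \<noteq> l1" "p0 \<noteq> l2" "p0 \<noteq> l3" "p0 \<noteq> l4" "p0 \<noteq> l5" "p0 \<noteq> l6" "p1 \<noteq> l0" "p1 \<noteq> l1" "p1 \<noteq> l2" "p1 \<noteq> l3" "p1 \<noteq> l4" "p1 \<noteq> l5" "p1 \<noteq> l6" "p2 \<noteq> l0" "p2 \<noteq> l1" "p2 \<noteq> l2" "p2 \<noteq> l3" "p2 \<noteq> l4" "p2 \<noteq> l5" "p2 \<noteq> l6" "p3 \<noteq> l0" "p3 \<noteq> l1" "p3 \<noteq> l2" "p3 \<noteq> l3" "p3 \<noteq> l4" "p3 \<noteq> l5" "p3 \<noteq> l6" "p4 \<noteq> l0" "p4 \<noteq> l1" "p4 \<noteq> l2" "p4 \<noteq> l3" "p4 \<noteq> l4" "p4 \<noteq> l5" "p4 \<noteq> l6" "p5 \<noteq> l0" "p5 \<noteq> l1" "p5 \<noteq> l2" "p5 \<noteq> l3" "p5 \<noteq> l4" "p5 \<noteq> l5" "p5 \<noteq> l6" "p6 \<noteq> l0" "p6 \<noteq> l1" "p6 \<noteq> l2" "p6 \<noteq> l3" "p6 \<noteq> l4" "p6 \<noteq> l5" "p6 \<noteq> l6"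
    using pP lL disj by auto
  have pair: "(E x l0 \<and> E y l0) \<or> (E x l1 \<and> E y l1) \<or> (E x l2 \<and> E y l2) \<or> (E x l3 \<and> E y l3) \<or>
      (E x l4 \<and> E y l4) \<or> (E x l5 \<and> E y l5) \<or> (E x l6 \<and> E y l6)"
    if xy: "x \<in> P" "y \<in> P" "x \<noteq> y" for x y
  proof -
    have xV: "x \<in> V" "y \<in> V" using xy PV by auto
    have xs: "x = p0 \<or> x = p1 \<or> x = p2 \<or> x = p3 \<or> x = p4 \<or> x = p5 \<or> x = p6"
      "y = p0 \<or> y = p1 \<or> y = p2 \<or> y = p3 \<or> y = p4 \<or> y = p5 \<or> y = p6" using xy Peq by auto
    show ?thesis using xs xy(3) tab by (elim disjE) simp_all
  qed
  have Leq: "L = {l0, l1, l2, l3, l4, l5, l6}"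
  proof
    show "{l0, l1, l2, l3, l4, l5, l6} \<subseteq> L" using lL by auto
    show "L \<subseteq> {l0, l1, l2, l3, l4, l5, l6}"
    proof
      fix l assume l: "l \<in> L"
      have "card (nbhd V E l) = 3" using nbhd3 l LV by auto
      then obtain x y z where xyz: "nbhd V E l = {x, y, z}" "x \<noteq> y" by (auto simp: card_3_iff)
      have e: "E l x" "E l y" using xyz(1) nbhd_iff by auto
      have xP: "x \<in> P" "y \<in> P" using ELP[OF e(1) l] ELP[OF e(2) l] .
      have e': "E x l" "E y l" using e Esym by auto
      have u: "l = m" if "E x m" "E y m" for m using uniq_line[OF xP xyz(2) e' that] .
      show "l \<in> {l0, l1, l2, l3, l4, l5, l6}" using pair[OF xP xyz(2)] u by auto
    qed
  qed
  define xs where "xs = [p0, p1, p2, p3, p4, p5, p6, l0, l1, l2, l3, l4, l5, l6]"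
  have dxs: "distinct xs" unfolding xs_def using dd ldist pl by auto
  have sxs: "set xs = V" unfolding xs_def using PL Peq Leq by auto
  have lxs: "length xs = 14" unfolding xs_def by simp
  have bij: "bij_betw (nth xs) {..<14} V" by (rule bij_betw_nth[OF dxs]) (simp_all add: lxs sxs)
  have PPf: "\<not> E p0 p0" "\<not> E p0 p1" "\<not> E p0 p2" "\<not> E p0 p3" "\<not> E p0 p4" "\<not> E p0 p5" "\<not> E p0 p6" "\<not> E p1 p0" "\<not> E p1 p1" "\<not> E p1 p2" "\<not> E p1 p3" "\<not> E p1 p4" "\<not> E p1 p5" "\<not> E p1 p6" "\<not> E p2 p0" "\<not> E p2 p1" "\<not> E p2 p2" "\<not> E p2 p3" "\<not> E p2 p4" "\<not> E p2 p5" "\<not> E p2 p6" "\<not> E p3 p0" "\<not> E p3 p1" "\<not> E p3 p2" "\<not> E p3 p3" "\<not> E p3 p4" "\<not> E p3 p5" "\<not> E p3 p6" "\<not> E p4 p0" "\<not> E p4 p1" "\<not> E p4 p2" "\<not> E p4 p3" "\<not> E p4 p4" "\<not> E p4 p5" "\<not> E p4 p6" "\<not> E p5 p0" "\<not> E p5 p1" "\<not> E p5 p2" "\<not> E p5 p3" "\<not> E p5 p4" "\<not> E p5 p5" "\<not> E p5 p6" "\<not> E p6 p0" "\<not> E p6 p1" "\<not> E p6 p2" "\<not> E p6 p3" "\<not> E p6 p4" "\<not> E p6 p5" "\<not> E p6 p6"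
    using PP pP by auto
  have LLf: "\<not> E l0 l0" "\<not> E l0 l1" "\<not> E l0 l2" "\<not> E l0 l3" "\<not> E l0 l4" "\<not> E l0 l5" "\<not> E l0 l6" "\<not> E l1 l0" "\<not> E l1 l1" "\<not> E l1 l2" "\<not> E l1 l3" "\<not> E l1 l4" "\<not> E l1 l5" "\<not> E l1 l6" "\<not> E l2 l0" "\<not> E l2 l1" "\<not> E l2 l2" "\<not> E l2 l3" "\<not> E l2 l4" "\<not> E l2 l5" "\<not> E l2 l6" "\<not> E l3 l0" "\<not> E l3 l1" "\<not> E l3 l2" "\<not> E l3 l3" "\<not> E l3 l4" "\<not> E l3 l5" "\<not> E l3 l6" "\<not> E l4 l0" "\<not> E l4 l1" "\<not> E l4 l2" "\<not> E l4 l3" "\<not> E l4 l4" "\<not> E l4 l5" "\<not> E l4 l6" "\<not> E l5 l0" "\<not> E l5 l1" "\<not> E l5 l2" "\<not> E l5 l3" "\<not> E l5 l4" "\<not> E l5 l5" "\<not> E l5 l6" "\<not> E l6 l0" "\<not> E l6 l1" "\<not> E l6 l2" "\<not> E l6 l3" "\<not> E l6 l4" "\<not> E l6 l5" "\<not> E l6 l6"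
    using LL lL by auto
  have lt14: "i < 14 \<Longrightarrow> i = 0 \<or> i = 1 \<or> i = 2 \<or> i = 3 \<or> i = 4 \<or> i = 5 \<or> i = 6 \<or> i = 7 \<or> i = 8
     \<or> i = 9 \<or> i = 10 \<or> i = 11 \<or> i = 12 \<or> i = 13" for i :: nat by presburger
  have table: "E (xs ! i) (xs ! j) \<longleftrightarrow> heawood_E i j" if "i < 14" "j < 14" for i j
    using lt14[OF that(1)] lt14[OF that(2)]
    by (elim disjE) (simp_all add: xs_def heawood_E_def heawood_inc_def tab tabs PPf LLf)
  define h where "h = the_inv_into {..<14} (nth xs)"
  have hb: "bij_betw h V {..<14}" unfolding h_def by (rule bij_betw_the_inv_into[OF bij])
  have hx: "xs ! (h x) = x" if "x \<in> V" for x
    unfolding h_def by (rule f_the_inv_into_f_bij_betw[OF bij that])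
  have hlt: "h x < 14" if "x \<in> V" for x using hb that by (auto simp: bij_betw_def)
  have "bij_betw h V heawood_V" using hb by (simp add: heawood_V_def lessThan_atLeast0)
  moreover have "\<forall>x\<in>V. \<forall>y\<in>V. E x y \<longleftrightarrow> heawood_E (h x) (h y)"
  proof (intro ballI)
    fix x y assume "x \<in> V" "y \<in> V"
    thus "E x y \<longleftrightarrow> heawood_E (h x) (h y)" using table[OF hlt hlt] hx by metis
  qed
  ultimately show ?thesis unfolding is_heawood_def graph_iso_def by blast
qed

end


lemma sum_pm:
  assumes "finite A"
  shows "(\<Sum>u\<in>A. (if u \<in> I then -1 else 1 :: int)) = int (card A) - 2 * int (card (A \<inter> I))"
proof -
  have "(\<Sum>u\<in>A. (if u \<in> I then -1 else 1 :: int)) = (\<Sum>u\<in>A \<inter> I. -1) + (\<Sum>u\<in>A - I. 1)"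
    using assms by (simp add: sum.If_cases Int_def Diff_eq)
  also have "\<dots> = - int (card (A \<inter> I)) + int (card (A - I))" by simp
  also have "card (A - I) = card A - card (A \<inter> I)" using assms by (simp add: card_Diff_subset_Int)
  also have "card (A \<inter> I) \<le> card A" using assms by (intro card_mono) auto
  hence "- int (card (A \<inter> I)) + int (card A - card (A \<inter> I)) = int (card A) - 2 * int (card (A \<inter> I))"
    by (simp add: of_nat_diff)
  finally show ?thesis .
qed

context cg begin

lemma heawood_char:
  assumes PL: "V = P \<union> L" "P \<inter> L = {}" and bip: "\<And>a b. E a b \<Longrightarrow> (a \<in> P \<longleftrightarrow> b \<in> L)"
    and cP: "card P = 7" and cliq: "\<forall>a\<in>P. \<forall>b\<in>P. a \<noteq> b \<longrightarrow> H a b"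
    and reg: "\<forall>x\<in>P. card (nb H x) = 6"
  shows "is_heawood V E"
proof -
  have "hw V E P L" by (intro hw.intro cg_axioms hw_axioms.intro) (use assms in auto)
  thus ?thesis by (rule hw.heawood)
qed

lemma open_packing:
  assumes nh: "\<not> is_heawood V E"
  shows "\<exists>I\<subseteq>V. indep H I \<and> card V \<le> 6 * card I"
proof -
  obtain x0 where x0: "x0 \<in> V" using con by (auto simp: connected_graph_def)
  have "card (nbhd V E x0) = 3" using nbhd3[OF x0] .
  hence "nbhd V E x0 \<noteq> {}" by auto
  then obtain m0 where m0: "E x0 m0" using nbhd_iff by blast
  have m0V: "m0 \<in> V" using Ein[OF m0] by simp
  have m0': "E m0 x0" using Esym[OF m0] .
  define C1 where "C1 = {y. H\<^sup>*\<^sup>* x0 y}"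
  define C2 where "C2 = {y. H\<^sup>*\<^sup>* m0 y}"
  interpret c1: comp6 H C1 unfolding C1_def by (rule comp6_inst[OF x0])
  interpret c2: comp6 H C2 unfolding C2_def by (rule comp6_inst[OF m0V])
  have C1V: "C1 \<subseteq> V" unfolding C1_def by (rule comp_sub[OF x0])
  have C2V: "C2 \<subseteq> V" unfolding C2_def by (rule comp_sub[OF m0V])
  have x0C1: "x0 \<in> C1" and m0C2: "m0 \<in> C2" by (auto simp: C1_def C2_def)
  have to2: "b \<in> C2" if "a \<in> C1" "E a b" for a b
    using cross[OF m0 _ that(2)] that(1) by (simp add: C1_def C2_def)
  have to1: "b \<in> C1" if "a \<in> C2" "E a b" for a b
    using cross[OF m0' _ that(2)] that(1) by (simp add: C1_def C2_def)
  have cover: "V \<subseteq> C1 \<union> C2"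
  proof
    fix y assume "y \<in> V"
    hence "E\<^sup>*\<^sup>* x0 y" using con x0 by (auto simp: connected_graph_def)
    thus "y \<in> C1 \<union> C2"
    proof (induction rule: rtranclp_induct)
      case base thus ?case using x0C1 by simp
    next
      case (step y z) thus ?case using to1 to2 by blast
    qed
  qed
  show ?thesis
  proof (cases "m0 \<in> C1")
    case True
    have "C2 \<subseteq> C1"
    proof
      fix y assume "y \<in> C2"
      hence "H\<^sup>*\<^sup>* m0 y" by (simp add: C2_def)
      moreover have "H\<^sup>*\<^sup>* x0 m0" using True by (simp add: C1_def)
      ultimately show "y \<in> C1" unfolding C1_def using rtranclp_trans by fastforce
    qed
    hence VC1: "V = C1" using cover C1V by blast
    have ne: "C1 \<noteq> {}" using x0C1 by auto
    from c1.component_bound[OF ne] show ?thesis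
    proof
      assume "\<exists>I\<subseteq>C1. indep H I \<and> card C1 \<le> 6 * card I"
      thus ?thesis using VC1 by simp
    next
      assume "(\<forall>x\<in>C1. card (nb H x) = 6) \<and> card C1 = 7 \<and> (\<forall>a\<in>C1. \<forall>b\<in>C1. a \<noteq> b \<longrightarrow> H a b)"
      hence "card V = 7" using VC1 by simp
      thus ?thesis using even_card by simp
    qed
  next
    case False
    have disj: "C1 \<inter> C2 = {}"
    proof (rule ccontr)
      assume "C1 \<inter> C2 \<noteq> {}"
      then obtain z where "H\<^sup>*\<^sup>* x0 z" "H\<^sup>*\<^sup>* m0 z" by (auto simp: C1_def C2_def)
      hence "H\<^sup>*\<^sup>* x0 m0" using H_rt_sym rtranclp_trans by metis
      thus False using False by (simp add: C1_def)
    qed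
    have Veq: "V = C1 \<union> C2" using cover C1V C2V by blast
    have bip1: "a \<in> C1 \<longleftrightarrow> b \<in> C2" if "E a b" for a b
    proof
      assume "a \<in> C1" thus "b \<in> C2" using to2 that by blast
    next
      assume b: "b \<in> C2"
      show "a \<in> C1"
      proof (rule ccontr)
        assume "a \<notin> C1"
        hence "a \<in> C2" using Veq Ein[OF that] by blast
        hence "b \<in> C1" using to1 that by blast
        thus False using b disj by blast
      qed
    qed
    have bip2: "a \<in> C2 \<longleftrightarrow> b \<in> C1" if "E a b" for a b
      using bip1[OF Esym[OF that]] bip1[OF that] Veq Ein[OF that] disj by blast
    have ne1: "C1 \<noteq> {}" and ne2: "C2 \<noteq> {}" using x0C1 m0C2 by auto
    obtain I1 where I1: "I1 \<subseteq> C1" "indep H I1" "card C1 \<le> 6 * card I1"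
    proof -
      from c1.component_bound[OF ne1] show ?thesis
      proof
        assume "\<exists>I\<subseteq>C1. indep H I \<and> card C1 \<le> 6 * card I"
        thus ?thesis using that by blast
      next
        assume h: "(\<forall>x\<in>C1. card (nb H x) = 6) \<and> card C1 = 7 \<and> (\<forall>a\<in>C1. \<forall>b\<in>C1. a \<noteq> b \<longrightarrow> H a b)"
        have "is_heawood V E" using heawood_char[OF Veq disj bip1] h by blast
        thus ?thesis using nh by simp
      qed
    qed
    obtain I2 where I2: "I2 \<subseteq> C2" "indep H I2" "card C2 \<le> 6 * card I2"
    proof -
      from c2.component_bound[OF ne2] show ?thesis
      proof
        assume "\<exists>I\<subseteq>C2. indep H I \<and> card C2 \<le> 6 * card I"
        thus ?thesis using that by blast
      next
        assume h: "(\<forall>x\<in>C2. card (nb H x) = 6) \<and> card C2 = 7 \<and> (\<forall>a\<in>C2. \<forall>b\<in>C2. a \<noteq> b \<longrightarrow> H a b)"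
        have "V = C2 \<union> C1" "C2 \<inter> C1 = {}" using Veq disj by auto
        hence "is_heawood V E" using heawood_char[of C2 C1] bip2 h by blast
        thus ?thesis using nh by simp
      qed
    qed
    have ind: "indep H (I1 \<union> I2)"
      unfolding indep_def
    proof (intro ballI)
      fix x y assume xy: "x \<in> I1 \<union> I2" "y \<in> I1 \<union> I2"
      show "\<not> H x y"
      proof
        assume Hxy: "H x y"
        have cl1: "y \<in> C1" if "x \<in> C1" using that Hxy c1.closed[OF that] by (auto simp: nb_def)
        have cl2: "y \<in> C2" if "x \<in> C2" using that Hxy c2.closed[OF that] by (auto simp: nb_def)
        show False
        proof (cases "x \<in> I1")
          case True
          hence "y \<in> C1" using cl1 I1(1) by auto
          hence "y \<in> I1" using xy(2) I2(1) disj by auto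
          thus False using I1(2) True Hxy by (auto simp: indep_def)
        next
          case False
          hence xI2: "x \<in> I2" using xy by auto
          hence "y \<in> C2" using cl2 I2(1) by auto
          hence "y \<in> I2" using xy(2) I1(1) disj by auto
          thus False using I2(2) xI2 Hxy by (auto simp: indep_def)
        qed
      qed
    qed
    have fin12: "finite C1" "finite C2" using c1.fin c2.fin .
    have "card V = card C1 + card C2" unfolding Veq using fin12 disj by (simp add: card_Un_disjoint)
    moreover have "card (I1 \<union> I2) = card I1 + card I2"
      using I1(1) I2(1) disj fin12 by (intro card_Un_disjoint) (auto intro: finite_subset)
    ultimately have "card V \<le> 6 * card (I1 \<union> I2)" using I1(3) I2(3) by simp
    moreover have "I1 \<union> I2 \<subseteq> V" using I1(1) I2(1) Veq by auto
    ultimately show ?thesis using ind by blast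
  qed
qed

lemma bound:
  assumes nh: "\<not> is_heawood V E"
  shows "3 * gamma_st V E \<le> 2 * int (card V)"
proof -
  obtain I where I: "I \<subseteq> V" "indep H I" "card V \<le> 6 * card I" using open_packing[OF nh] by blast
  define f where "f v = (if v \<in> I then -1 else 1 :: int)" for v
  have le1: "card (nbhd V E v \<inter> I) \<le> 1" if "v \<in> V" for v
  proof -
    have "\<forall>a\<in>nbhd V E v \<inter> I. \<forall>b\<in>nbhd V E v \<inter> I. a = b"
    proof (intro ballI)
      fix a b assume ab: "a \<in> nbhd V E v \<inter> I" "b \<in> nbhd V E v \<inter> I"
      show "a = b"
      proof (rule ccontr)
        assume "a \<noteq> b"
        moreover have "E a v" "E b v" using ab nbhd_iff Esym by auto
        ultimately have "H a b" unfolding hn_def using ab I(1) by blast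
        thus False using I(2) ab by (auto simp: indep_def)
      qed
    qed
    thus ?thesis using nbhd_fin by (simp add: card_le_Suc0_iff_eq)
  qed
  have stdf: "is_STDF V E f"
    unfolding is_STDF_def
  proof (intro conjI ballI)
    fix v assume "v \<in> V" thus "f v \<in> {-1, 1}" by (simp add: f_def)
  next
    fix v assume v: "v \<in> V"
    have "(\<Sum>u\<in>nbhd V E v. f u) = int (card (nbhd V E v)) - 2 * int (card (nbhd V E v \<inter> I))"
      unfolding f_def by (rule sum_pm[OF nbhd_fin])
    thus "1 \<le> (\<Sum>u\<in>nbhd V E v. f u)" using nbhd3[OF v] le1[OF v] by simp
  qed
  have "(\<Sum>v\<in>V. f v) = int (card V) - 2 * int (card (V \<inter> I))"
    unfolding f_def by (rule sum_pm[OF finV])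
  moreover have "V \<inter> I = I" using I(1) by auto
  ultimately have sf: "(\<Sum>v\<in>V. f v) = int (card V) - 2 * int (card I)" by simp
  have "gamma_st V E \<le> (\<Sum>v\<in>V. f v)"
    unfolding gamma_st_def
  proof (rule Min_le)
    have "{(\<Sum>v\<in>V. f v) | f. is_STDF V E f} \<subseteq> {- int (card V) .. int (card V)}"
    proof
      fix x assume "x \<in> {(\<Sum>v\<in>V. f v) | f. is_STDF V E f}"
      then obtain g where g: "x = (\<Sum>v\<in>V. g v)" "is_STDF V E g" by blast
      have "\<bar>\<Sum>v\<in>V. g v\<bar> \<le> (\<Sum>v\<in>V. \<bar>g v\<bar>)" by (rule sum_abs)
      also have "\<dots> = (\<Sum>v\<in>V. 1)" using g(2) unfolding is_STDF_def by (intro sum.cong) auto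
      finally show "x \<in> {- int (card V) .. int (card V)}" using g(1) by (simp add: abs_le_iff)
    qed
    thus "finite {(\<Sum>v\<in>V. f v) | f. is_STDF V E f}" by (rule finite_subset) simp
    show "(\<Sum>v\<in>V. f v) \<in> {(\<Sum>v\<in>V. f v) | f. is_STDF V E f}" using stdf by blast
  qed
  thus ?thesis using sf I(3) by linarith
qed

end


lemma STDF_sum_bound:
  assumes "finite V" "is_STDF V E f"
  shows "\<bar>\<Sum>v\<in>V. f v\<bar> \<le> int (card V)"
proof -
  have "\<bar>\<Sum>v\<in>V. f v\<bar> \<le> (\<Sum>v\<in>V. \<bar>f v\<bar>)" by (rule sum_abs)
  also have "\<dots> = (\<Sum>v\<in>V. 1)"
    using assms(2) unfolding is_STDF_def by (intro sum.cong) auto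
  finally show ?thesis by simp
qed

lemma STDF_sums_finite:
  assumes "finite V"
  shows "finite {(\<Sum>v\<in>V. f v) | f. is_STDF V E f}"
proof -
  have "{(\<Sum>v\<in>V. f v) | f. is_STDF V E f} \<subseteq> {- int (card V) .. int (card V)}"
  proof
    fix x assume "x \<in> {(\<Sum>v\<in>V. f v) | f. is_STDF V E f}"
    then obtain f where "x = (\<Sum>v\<in>V. f v)" "is_STDF V E f" by blast
    thus "x \<in> {- int (card V) .. int (card V)}"
      using STDF_sum_bound[OF assms, of E f] by (simp add: abs_le_iff)
  qed
  thus ?thesis by (rule finite_subset) simp
qed

lemma gamma_st_le:
  assumes "finite V" "is_STDF V E f"
  shows "gamma_st V E \<le> (\<Sum>v\<in>V. f v)"
  unfolding gamma_st_def
  by (rule Min_le[OF STDF_sums_finite[OF assms(1)]]) (use assms(2) in blast)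

definition exN :: "nat \<Rightarrow> nat set" where
  "exN v = (if v = 0 then {6,8,9} else if v = 1 then {8,10,11} else if v = 2 then {7,9,11}
     else if v = 3 then {6,7,11} else if v = 4 then {6,9,10} else if v = 5 then {7,8,10}
     else if v = 6 then {0,3,4} else if v = 7 then {2,3,5} else if v = 8 then {0,1,5}
     else if v = 9 then {0,2,4} else if v = 10 then {1,4,5} else if v = 11 then {1,2,3} else {})"

definition exW :: "nat set" where "exW = {0,1,2,3,4,5,6,7,8,9,10,11}"
definition exF :: "nat \<Rightarrow> nat \<Rightarrow> bool" where "exF x y \<longleftrightarrow> y \<in> exN x"

lemma exW_cases: "v \<in> exW \<longleftrightarrow> v = 0 \<or> v = 1 \<or> v = 2 \<or> v = 3 \<or> v = 4 \<or> v = 5 \<or> v = 6 \<or> v = 7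
   \<or> v = 8 \<or> v = 9 \<or> v = 10 \<or> v = 11"
  by (simp add: exW_def)

lemma exN_sub: "exN v \<subseteq> exW"
  by (simp add: exN_def exW_def)

lemma exN_empty: "v \<notin> exW \<Longrightarrow> exN v = {}"
  unfolding exW_cases exN_def by auto

lemma ex_nbhd: "nbhd exW exF v = exN v"
  using exN_sub unfolding nbhd_def exF_def by auto

lemma ex_simple: "simple_graph exW exF"
proof -
  have sym: "exF x y \<Longrightarrow> exF y x" for x y
  proof -
    assume "exF x y"
    hence "x \<in> exW" using exN_empty unfolding exF_def by fastforce
    thus ?thesis using \<open>exF x y\<close> unfolding exW_cases exF_def exN_def by (auto split: if_splits)
  qed
  have irr: "\<not> exF x x" for x
    by (cases "x \<in> exW") (auto simp: exW_cases exF_def exN_def exN_empty)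
  have inW: "exF x y \<Longrightarrow> x \<in> exW \<and> y \<in> exW" for x y
    using sym[of x y] exN_sub unfolding exF_def by blast
  show ?thesis unfolding simple_graph_def
    using sym irr inW by (auto simp: exW_def)
qed

lemma ex_cubic: "cubic exW exF"
  unfolding cubic_def ex_nbhd by (simp add: exW_def exN_def)

lemma ex_conn: "connected_graph exW exF"
proof -
  have e: "exF x y" if "y \<in> exN x" for x y using that by (simp add: exF_def)
  have sym: "exF x y \<Longrightarrow> exF y x" for x y
    using ex_simple unfolding simple_graph_def by blast
  have r0: "exF\<^sup>*\<^sup>* 0 v" if "v \<in> exW" for v
  proof -
    have s: "exF\<^sup>*\<^sup>* a c" if "exF\<^sup>*\<^sup>* a b" "exF b c" for a b c
      using that by (rule rtranclp.rtrancl_into_rtrancl)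
    have p0: "exF\<^sup>*\<^sup>* 0 0" by simp
    have p6: "exF\<^sup>*\<^sup>* 0 6" by (rule s[OF p0]) (simp add: exF_def exN_def)
    have p8: "exF\<^sup>*\<^sup>* 0 8" by (rule s[OF p0]) (simp add: exF_def exN_def)
    have p9: "exF\<^sup>*\<^sup>* 0 9" by (rule s[OF p0]) (simp add: exF_def exN_def)
    have p3: "exF\<^sup>*\<^sup>* 0 3" by (rule s[OF p6]) (simp add: exF_def exN_def)
    have p4: "exF\<^sup>*\<^sup>* 0 4" by (rule s[OF p6]) (simp add: exF_def exN_def)
    have p1: "exF\<^sup>*\<^sup>* 0 1" by (rule s[OF p8]) (simp add: exF_def exN_def)
    have p5: "exF\<^sup>*\<^sup>* 0 5" by (rule s[OF p8]) (simp add: exF_def exN_def)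
    have p2: "exF\<^sup>*\<^sup>* 0 2" by (rule s[OF p9]) (simp add: exF_def exN_def)
    have p10: "exF\<^sup>*\<^sup>* 0 10" by (rule s[OF p1]) (simp add: exF_def exN_def)
    have p11: "exF\<^sup>*\<^sup>* 0 11" by (rule s[OF p1]) (simp add: exF_def exN_def)
    have p7: "exF\<^sup>*\<^sup>* 0 7" by (rule s[OF p2]) (simp add: exF_def exN_def)
    show ?thesis using that p0 p1 p2 p3 p4 p5 p6 p7 p8 p9 p10 p11 unfolding exW_cases by auto
  qed
  have symr: "exF\<^sup>*\<^sup>* b a" if "exF\<^sup>*\<^sup>* a b" for a b
    using that by (induction rule: rtranclp_induct) (auto intro: converse_rtranclp_into_rtranclp sym)
  have "exF\<^sup>*\<^sup>* u v" if "u \<in> exW" "v \<in> exW" for u v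
    using rtranclp_trans[OF symr[OF r0[OF that(1)]] r0[OF that(2)]] .
  thus ?thesis unfolding connected_graph_def by (auto simp: exW_def)
qed

lemma ex_not_heawood: "\<not> is_heawood exW exF"
proof
  assume "is_heawood exW exF"
  then obtain h where "bij_betw h exW heawood_V"
    unfolding is_heawood_def graph_iso_def by blast
  hence "card exW = card heawood_V" by (rule bij_betw_same_card)
  thus False by (simp add: exW_def heawood_V_def)
qed

lemma ex_gamma: "gamma_st exW exF = 8"
proof -
  define S where "S = {(\<Sum>v\<in>exW. f v) | f. is_STDF exW exF f}"
  have fin: "finite S" unfolding S_def by (rule STDF_sums_finite) (simp add: exW_def)
  define f0 :: "nat \<Rightarrow> int" where "f0 v = (if v = 0 \<or> v = 6 then -1 else 1)" for v
  have st0: "is_STDF exW exF f0"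
    unfolding is_STDF_def ex_nbhd by (simp add: exW_def exN_def f0_def)
  have s0: "(\<Sum>v\<in>exW. f0 v) = 8" by (simp add: exW_def f0_def)
  have low: "8 \<le> (\<Sum>v\<in>exW. f v)" if st: "is_STDF exW exF f" for f
  proof -
    have val: "f v = -1 \<or> f v = 1" if "v \<in> exW" for v using st that unfolding is_STDF_def by auto
    have c: "1 \<le> (\<Sum>u\<in>exN v. f u)" if "v \<in> exW" for v using st that unfolding is_STDF_def ex_nbhd by auto
    have v0: "f 0 = -1 \<or> f 0 = 1" "f 1 = -1 \<or> f 1 = 1" "f 2 = -1 \<or> f 2 = 1" "f 3 = -1 \<or> f 3 = 1"
      "f 4 = -1 \<or> f 4 = 1" "f 5 = -1 \<or> f 5 = 1" "f 6 = -1 \<or> f 6 = 1" "f 7 = -1 \<or> f 7 = 1"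
      "f 8 = -1 \<or> f 8 = 1" "f 9 = -1 \<or> f 9 = 1" "f 10 = -1 \<or> f 10 = 1" "f 11 = -1 \<or> f 11 = 1"
      using val by (auto simp: exW_def)
    have c6: "1 \<le> f 0 + f 3 + f 4" using c[of 6] by (simp add: exW_def exN_def)
    have c7: "1 \<le> f 2 + f 3 + f 5" using c[of 7] by (simp add: exW_def exN_def)
    have c8: "1 \<le> f 0 + f 1 + f 5" using c[of 8] by (simp add: exW_def exN_def)
    have c9: "1 \<le> f 0 + f 2 + f 4" using c[of 9] by (simp add: exW_def exN_def)
    have c10: "1 \<le> f 1 + f 4 + f 5" using c[of 10] by (simp add: exW_def exN_def)
    have c11: "1 \<le> f 1 + f 2 + f 3" using c[of 11] by (simp add: exW_def exN_def)
    have c0: "1 \<le> f 6 + f 8 + f 9" using c[of 0] by (simp add: exW_def exN_def)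
    have c1: "1 \<le> f 8 + f 10 + f 11" using c[of 1] by (simp add: exW_def exN_def)
    have c2: "1 \<le> f 7 + f 9 + f 11" using c[of 2] by (simp add: exW_def exN_def)
    have c3: "1 \<le> f 6 + f 7 + f 11" using c[of 3] by (simp add: exW_def exN_def)
    have c4: "1 \<le> f 6 + f 9 + f 10" using c[of 4] by (simp add: exW_def exN_def)
    have c5: "1 \<le> f 7 + f 8 + f 10" using c[of 5] by (simp add: exW_def exN_def)
    have A: "4 \<le> f 0 + f 1 + f 2 + f 3 + f 4 + f 5"
      using v0(1-6) c6 c7 c8 c9 c10 c11 by smt
    have B: "4 \<le> f 6 + f 7 + f 8 + f 9 + f 10 + f 11"
      using v0(7-12) c0 c1 c2 c3 c4 c5 by smt
    have "(\<Sum>v\<in>exW. f v) = f 0 + f 1 + f 2 + f 3 + f 4 + f 5 + (f 6 + f 7 + f 8 + f 9 + f 10 + f 11)"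
      by (simp add: exW_def)
    thus ?thesis using A B by linarith
  qed
  have "Min S = 8"
    by (rule Min_eqI[OF fin]) (use low s0 st0 in \<open>auto simp: S_def\<close>)
  thus ?thesis unfolding gamma_st_def S_def .
qed

theorem theorem2p4:
  fixes V :: "'a set" and E :: "'a \<Rightarrow> 'a \<Rightarrow> bool"
  shows "(simple_graph V E \<and> connected_graph V E \<and> cubic V E \<and> \<not> is_heawood V E
            \<longrightarrow> 3 * gamma_st V E \<le> 2 * int (card V))
       \<and> (\<exists>(W :: nat set) F. simple_graph W F \<and> connected_graph W F \<and> cubic W F
            \<and> \<not> is_heawood W F \<and> 3 * gamma_st W F = 2 * int (card W))"
proof
  show "simple_graph V E \<and> connected_graph V E \<and> cubic V E \<and> \<not> is_heawood V E
            \<longrightarrow> 3 * gamma_st V E \<le> 2 * int (card V)"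
  proof (intro impI, elim conjE)
    assume a: "simple_graph V E" "connected_graph V E" "cubic V E" "\<not> is_heawood V E"
    have "cg V E" by (intro cg.intro) (use a in auto)
    from cg.bound[OF this a(4)] show "3 * gamma_st V E \<le> 2 * int (card V)" .
  qed
next
  have "card exW = 12" by (simp add: exW_def)
  hence "3 * gamma_st exW exF = 2 * int (card exW)" using ex_gamma by simp
  thus "\<exists>(W :: nat set) F. simple_graph W F \<and> connected_graph W F \<and> cubic W F
            \<and> \<not> is_heawood W F \<and> 3 * gamma_st W F = 2 * int (card W)"
    using ex_simple ex_conn ex_cubic ex_not_heawood by blast
qed

end
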